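(* Let $n\ge 2$. The $V_n$-graded Hilbert functions of the $R/J_n$-modules $\langle p_n\rangle$ and $\langle p^+_{n,i}\rangle$, $i=1,\dots,n$, take only the values $0$ and $1$.
   Context: Let $\mathbbm{k}$ be a field, $[n]=\{1,\dots,n\}$, $R=\mathbbm{k}[x_{ij}:1\le i\le j\le n]$ with $x_{ij}=x_{ji}$; exponent vectors in $\mathbb{N}^{\binom{n+1}{2}}$ with basis $e_{ij}=e_{ji}$. $V_n$ is the $n\times\binom{n+1}{2}$ matrix whose column indexed by $jk$ is $e_j+e_k\in\mathbb{Z}^n$; $R$ is $\mathbb{N}^n$-graded by $\deg x_{jk}=e_j+e_k$ (the $V_n$-grading), and the $V_n$-graded Hilbert function of a graded module $M$ is $\mathbf b\mapsto\dim_{\mathbbm{k}}M_{\mathbf b}$. For $\mathbf b\in\mathbb{N}^n$, $V_n^{-1}[\mathbf b]=\{u\in\mathbb{N}^{\binom{n+1}{2}}:V_nu=\mathbf b\}$. $J_n$ is the ($V_n$-homogeneous) ideal generated by the principal $2$-minors $x_{ii}x_{jj}-x_{ij}^2$. With $[ij|kl]:=e_{ik}+e_{jl}-e_{il}-e_{jk}$, $L'_n$ is the lattice generated by the $[ij|ij]$; two points of a fiber are equivalent if their difference lies in $L'_n$. Define $p_n=\prod_{1\le i<j\le n-1}(x_{ij}x_{nn}+x_{in}x_{jn})$. If $n$ is odd, $p^+_{n,i}\in R/J_n$ is the sum of $x^{\mathbf a}$ over the equivalence classes $\mathbf a$ of $V_n^{-1}[(n-2,\dots,n-2)+e_i]$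 modulo $L'_n$; if $n$ is even, $p^+_{n,i}:=p^+_n$ for all $i$, the sum of $x^{\mathbf a}$ over the equivalence classes of $V_n^{-1}[(n-2,\dots,n-2)]$ modulo $L'_n$. *)

theory Defs
  imports Main HOL.Vector_Spaces "HOL-Library.Poly_Mapping"
begin

text \<open>Polynomials in the variables x_ij (i <= j, indexed by the pair (i,j)) with
  coefficients in a field 'k.  Monomials are exponent vectors (nat*nat =>0 nat).\<close>

type_synonym 'k spoly = "((nat \<times> nat) \<Rightarrow>\<^sub>0 nat) \<Rightarrow>\<^sub>0 'k"

text \<open>Valid variable indices: 1 <= i <= j <= n  (x_ij = x_ji is stored at (min,max)).\<close>
definition valid_idx :: "nat \<Rightarrow> nat \<times> nat \<Rightarrow> bool" where
  "valid_idx n ij \<longleftrightarrow> 1 \<le> fst ij \<and> fst ij \<le> snd ij \<and> snd ij \<le> n"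

definition X :: "nat \<Rightarrow> nat \<Rightarrow> 'k::field spoly" where
  "X i j = Poly_Mapping.single (Poly_Mapping.single (min i j, max i j) 1) 1"

definition Mons :: "nat \<Rightarrow> ((nat \<times> nat) \<Rightarrow>\<^sub>0 nat) set" where
  "Mons n = {u. \<forall>ij \<in> Poly_Mapping.keys u. valid_idx n ij}"

text \<open>The V_n-degree V_n u of an exponent vector (column jk of V_n is e_j + e_k).\<close>
definition Vdeg :: "((nat \<times> nat) \<Rightarrow>\<^sub>0 nat) \<Rightarrow> nat \<Rightarrow> nat" where
  "Vdeg u = (\<lambda>k. \<Sum>ij \<in> Poly_Mapping.keys u. Poly_Mapping.lookup u ij *
       ((if fst ij = k then 1 else 0) + (if snd ij = k then 1 else 0)))"

definition Rn :: "nat \<Rightarrow> 'k::field spoly set" where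
  "Rn n = {p. \<forall>u \<in> Poly_Mapping.keys p. u \<in> Mons n}"

definition Rdeg :: "nat \<Rightarrow> (nat \<Rightarrow> nat) \<Rightarrow> 'k::field spoly set" where
  "Rdeg n b = {p \<in> Rn n. \<forall>u \<in> Poly_Mapping.keys p. Vdeg u = b}"

definition Jn :: "nat \<Rightarrow> 'k::field spoly set" where
  "Jn n = {\<Sum>ij \<in> {(i,j). 1 \<le> i \<and> i < j \<and> j \<le> n}.
              q ij * (X (fst ij) (fst ij) * X (snd ij) (snd ij) - X (fst ij) (snd ij) ^ 2)
           | q. \<forall>ij. q ij \<in> Rn n}"

text \<open>Preimage in R of the R/J_n-submodule generated by the class of f: (f) + J_n.\<close>
definition gen_mod :: "nat \<Rightarrow> 'k::field spoly \<Rightarrow> 'k spoly set" where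
  "gen_mod n f = {q * f + h | q h. q \<in> Rn n \<and> h \<in> Jn n}"

definition kscale :: "'k::field \<Rightarrow> 'k spoly \<Rightarrow> 'k spoly" where
  "kscale c p = Poly_Mapping.single 0 c * p"

text \<open>V_n-graded Hilbert function of the R/J_n-module generated by the class of f:
  dim_k ( ((f)+J_n) / J_n )_b = dim_k ((f)+J_n)_b - dim_k (J_n)_b.\<close>
definition hilb :: "nat \<Rightarrow> 'k::field spoly \<Rightarrow> (nat \<Rightarrow> nat) \<Rightarrow> nat" where
  "hilb n f b = vector_space.dim kscale (gen_mod n f \<inter> Rdeg n b)
              - vector_space.dim kscale (Jn n \<inter> Rdeg n b :: 'k spoly set)"

definition pn :: "nat \<Rightarrow> 'k::field spoly" where
  "pn n = (\<Prod>ij \<in> {(i,j). 1 \<le> i \<and> i < j \<and> j \<le> n - 1}.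
             X (fst ij) (snd ij) * X n n + X (fst ij) n * X (snd ij) n)"

definition brk :: "nat \<Rightarrow> nat \<Rightarrow> nat \<times> nat \<Rightarrow> int" where
  "brk i j ab = (if ab = (i,i) then 1 else 0) + (if ab = (j,j) then 1 else 0)
                - (if ab = (min i j, max i j) then 2 else 0)"

definition Lprime :: "nat \<Rightarrow> (nat \<times> nat \<Rightarrow> int) set" where
  "Lprime n = {(\<lambda>ab. \<Sum>ij \<in> {(i,j). 1 \<le> i \<and> i < j \<and> j \<le> n}. c ij * brk (fst ij) (snd ij) ab)
              | c. True}"

definition fiber :: "nat \<Rightarrow> (nat \<Rightarrow> nat) \<Rightarrow> ((nat \<times> nat) \<Rightarrow>\<^sub>0 nat) set" where
  "fiber n b = {u \<in> Mons n. Vdeg u = b}"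

definition Lequiv :: "nat \<Rightarrow> (((nat \<times> nat) \<Rightarrow>\<^sub>0 nat) \<times> ((nat \<times> nat) \<Rightarrow>\<^sub>0 nat)) set" where
  "Lequiv n = {(u, v). (\<lambda>ab. int (Poly_Mapping.lookup u ab) - int (Poly_Mapping.lookup v ab)) \<in> Lprime n}"

text \<open>Sum of x^a over the equivalence classes a of V_n^{-1}[b] modulo L'_n
  (one representative monomial per class; well defined in R/J_n).\<close>
definition class_sum :: "nat \<Rightarrow> (nat \<Rightarrow> nat) \<Rightarrow> 'k::field spoly" where
  "class_sum n b = (\<Sum>C \<in> fiber n b // Lequiv n. Poly_Mapping.single (SOME u. u \<in> C) 1)"

definition pplus :: "nat \<Rightarrow> nat \<Rightarrow> 'k::field spoly" where
  "pplus n i = (if odd n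
     then class_sum n (\<lambda>k. if 1 \<le> k \<and> k \<le> n then (n - 2) + (if k = i then 1 else 0) else 0)
     else class_sum n (\<lambda>k. if 1 \<le> k \<and> k \<le> n then n - 2 else 0))"

end

theory Submission
  imports Defs "HOL-Library.FuncSet"
begin


lemma lookup_kscale: "Poly_Mapping.lookup (kscale c p) u = c * Poly_Mapping.lookup p u"
  unfolding kscale_def mult_map_scale_conv_mult[symmetric]
  by (simp add: map.rep_eq when_def)

lemma kscale_vs: "vector_space (kscale :: 'k::field \<Rightarrow> 'k spoly \<Rightarrow> 'k spoly)"
  by unfold_locales (auto intro!: poly_mapping_eqI simp: lookup_kscale lookup_add algebra_simps)

interpretation ks: vector_space "kscale :: 'k::field \<Rightarrow> 'k spoly \<Rightarrow> 'k spoly"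
  by (rule kscale_vs)

lemma kscale_single: "kscale c (Poly_Mapping.single u (1::'k::field)) = Poly_Mapping.single u c"
  by (simp add: kscale_def mult_single)

lemma kscale_mult: "kscale c (p * q) = kscale c p * (q :: 'k::field spoly)"
  by (simp add: kscale_def mult.assoc)

lemma poly_expand: "p = (\<Sum>u\<in>Poly_Mapping.keys p. Poly_Mapping.single u (Poly_Mapping.lookup p u))"
proof (rule poly_mapping_eqI)
  fix k
  have "(\<Sum>u\<in>Poly_Mapping.keys p. Poly_Mapping.lookup (Poly_Mapping.single u (Poly_Mapping.lookup p u)) k)
     = (\<Sum>u\<in>Poly_Mapping.keys p. if u = k then Poly_Mapping.lookup p k else 0)"
    by (rule sum.cong) (auto simp: lookup_single when_def)
  also have "\<dots> = Poly_Mapping.lookup p k"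
    by (auto simp: in_keys_iff)
  finally show "Poly_Mapping.lookup p k = Poly_Mapping.lookup (\<Sum>u\<in>Poly_Mapping.keys p. Poly_Mapping.single u (Poly_Mapping.lookup p u)) k"
    by (simp add: lookup_sum)
qed

definition wt :: "nat \<times> nat \<Rightarrow> nat \<Rightarrow> nat" where
  "wt ij k = (if fst ij = k then 1 else 0) + (if snd ij = k then 1 else 0)"

lemma Vdeg_sup:
  assumes "finite A" "Poly_Mapping.keys u \<subseteq> A"
  shows "Vdeg u k = (\<Sum>ij\<in>A. Poly_Mapping.lookup u ij * wt ij k)"
  unfolding Vdeg_def wt_def
  by (rule sum.mono_neutral_left) (use assms in \<open>auto simp: in_keys_iff\<close>)

lemma Vdeg_add: "Vdeg (u + v) k = Vdeg u k + Vdeg v k"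
proof -
  let ?A = "Poly_Mapping.keys u \<union> Poly_Mapping.keys v"
  have f: "finite ?A" by simp
  have "Poly_Mapping.keys (u+v) \<subseteq> ?A" by (rule keys_add)
  then show "Vdeg (u + v) k = Vdeg u k + Vdeg v k"
    using Vdeg_sup[OF f] by (simp add: lookup_add algebra_simps sum.distrib)
qed

lemma Vdeg_zero [simp]: "Vdeg 0 k = 0"
  by (simp add: Vdeg_def fun_eq_iff)

lemma Vdeg_single: "Vdeg (Poly_Mapping.single ij c) k = c * wt ij k"
  using Vdeg_sup[of "{ij}" "Poly_Mapping.single ij c" k] by simp

definition VP :: "nat \<Rightarrow> (nat \<times> nat) set" where
  "VP n = {ij. valid_idx n ij}"

lemma finite_VP [simp]: "finite (VP n)"
proof -
  have "VP n \<subseteq> {0..n} \<times> {0..n}" by (auto simp: VP_def valid_idx_def)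
  then show ?thesis by (rule finite_subset) simp
qed

lemma Mons_keys: "u \<in> Mons n \<longleftrightarrow> Poly_Mapping.keys u \<subseteq> VP n"
  by (auto simp: Mons_def VP_def)

lemma Mons_add: "u \<in> Mons n \<Longrightarrow> v \<in> Mons n \<Longrightarrow> u + v \<in> Mons n"
  using keys_add[of u v] by (auto simp: Mons_keys)

lemma Mons_zero [simp]: "0 \<in> Mons n"
  by (simp add: Mons_def)

lemma Mons_single: "valid_idx n ij \<Longrightarrow> Poly_Mapping.single ij c \<in> Mons n"
  by (auto simp: Mons_def)

lemma Mons_lookup0: "u \<in> Mons n \<Longrightarrow> \<not> valid_idx n ij \<Longrightarrow> Poly_Mapping.lookup u ij = 0"
  by (auto simp: Mons_def in_keys_iff)

lemma Vdeg_Mons: "u \<in> Mons n \<Longrightarrow> Vdeg u k = (\<Sum>ij\<in>VP n. Poly_Mapping.lookup u ij * wt ij k)"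
  by (rule Vdeg_sup) (auto simp: Mons_keys)

lemma Rn_iff: "p \<in> Rn n \<longleftrightarrow> (\<forall>u\<in>Poly_Mapping.keys p. u \<in> Mons n)"
  by (simp add: Rn_def)

lemma Rn_add: "p \<in> Rn n \<Longrightarrow> q \<in> Rn n \<Longrightarrow> p + q \<in> Rn n"
  using keys_add[of p q] by (auto simp: Rn_def)

lemma Rn_diff: "p \<in> Rn n \<Longrightarrow> q \<in> Rn n \<Longrightarrow> p - q \<in> Rn n"
  using keys_diff[of p q] by (auto simp: Rn_def)

lemma Rn_uminus: "p \<in> Rn n \<Longrightarrow> - p \<in> Rn n"
  by (auto simp: Rn_def)

lemma Rn_zero [simp]: "0 \<in> Rn n"
  by (simp add: Rn_def)

lemma Rn_mult: "p \<in> Rn n \<Longrightarrow> q \<in> Rn n \<Longrightarrow> (p * q :: 'k::field spoly) \<in> Rn n"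
proof -
  assume p: "p \<in> Rn n" and q: "q \<in> Rn n"
  { fix u assume "u \<in> Poly_Mapping.keys (p * q)"
    then obtain a b where "u = a + b" "a \<in> Poly_Mapping.keys p" "b \<in> Poly_Mapping.keys q"
      using keys_mult[of p q] by blast
    then have "u \<in> Mons n" using p q by (auto simp: Rn_def intro: Mons_add) }
  then show ?thesis by (simp add: Rn_def)
qed

lemma Rn_single: "u \<in> Mons n \<Longrightarrow> Poly_Mapping.single u c \<in> Rn n"
  by (auto simp: Rn_def)

lemma Rn_sum: "(\<And>x. x \<in> A \<Longrightarrow> f x \<in> Rn n) \<Longrightarrow> sum f A \<in> Rn n"
  by (induction A rule: infinite_finite_induct) (auto intro: Rn_add)

lemma Rn_kscale: "p \<in> Rn n \<Longrightarrow> kscale c p \<in> Rn n"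
  by (auto simp: Rn_def in_keys_iff lookup_kscale)

lemma Rn_X: "1 \<le> i \<Longrightarrow> i \<le> n \<Longrightarrow> 1 \<le> j \<Longrightarrow> j \<le> n \<Longrightarrow> (X i j :: 'k::field spoly) \<in> Rn n"
  unfolding X_def by (rule Rn_single, rule Mons_single) (auto simp: valid_idx_def)



definition Ps :: "nat \<Rightarrow> (nat \<times> nat) set" where
  "Ps n = {(i,j). 1 \<le> i \<and> i < j \<and> j \<le> n}"

lemma finite_Ps [simp]: "finite (Ps n)"
proof -
  have "Ps n \<subseteq> {0..n} \<times> {0..n}" by (auto simp: Ps_def)
  then show ?thesis by (rule finite_subset) simp
qed

abbreviation gJ :: "nat \<times> nat \<Rightarrow> 'k::field spoly" where
  "gJ ij \<equiv> X (fst ij) (fst ij) * X (snd ij) (snd ij) - X (fst ij) (snd ij) ^ 2"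

lemma Jn_alt: "Jn n = {\<Sum>ij \<in> Ps n. q ij * gJ ij | q. \<forall>ij. q ij \<in> Rn n}"
  unfolding Jn_def Ps_def by (rule refl)

lemma Jn_I: "(\<And>ij. q ij \<in> Rn n) \<Longrightarrow> (\<Sum>ij \<in> Ps n. q ij * gJ ij) \<in> Jn n"
  unfolding Jn_alt by blast

lemma Jn_E: "h \<in> Jn n \<Longrightarrow> (\<And>q. (\<And>ij. q ij \<in> Rn n) \<Longrightarrow> h = (\<Sum>ij \<in> Ps n. q ij * gJ ij) \<Longrightarrow> P) \<Longrightarrow> P"
  unfolding Jn_alt by blast

lemma Jn_zero [simp]: "0 \<in> Jn n"
proof -
  have "(\<Sum>ij \<in> Ps n. (0::'a::field spoly) * gJ ij) \<in> Jn n"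
    by (rule Jn_I) simp
  then show ?thesis by simp
qed

lemma Jn_add: "h1 \<in> Jn n \<Longrightarrow> h2 \<in> Jn n \<Longrightarrow> h1 + h2 \<in> Jn n"
proof -
  assume a1: "h1 \<in> Jn n" and a2: "h2 \<in> Jn n"
  obtain q1 where q1: "\<And>ij. q1 ij \<in> Rn n" and h1: "h1 = (\<Sum>ij \<in> Ps n. q1 ij * gJ ij)"
    using a1 unfolding Jn_alt by blast
  obtain q2 where q2: "\<And>ij. q2 ij \<in> Rn n" and h2: "h2 = (\<Sum>ij \<in> Ps n. q2 ij * gJ ij)"
    using a2 unfolding Jn_alt by blast
  note q = q1 q2 and h = h1 h2
  have "h1 + h2 = (\<Sum>ij \<in> Ps n. (q1 ij + q2 ij) * gJ ij)"
    by (simp add: h distrib_right sum.distrib)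
  moreover have "(\<Sum>ij \<in> Ps n. (q1 ij + q2 ij) * gJ ij) \<in> Jn n"
    by (rule Jn_I) (simp add: q Rn_add)
  ultimately show ?thesis by simp
qed

lemma Jn_mult: "r \<in> Rn n \<Longrightarrow> h \<in> Jn n \<Longrightarrow> r * h \<in> Jn n"
proof -
  assume r: "r \<in> Rn n" and a: "h \<in> Jn n"
  obtain q where q: "\<And>ij. q ij \<in> Rn n" and h: "h = (\<Sum>ij \<in> Ps n. q ij * gJ ij)"
    using a unfolding Jn_alt by blast
  have "r * h = (\<Sum>ij \<in> Ps n. (r * q ij) * gJ ij)"
    by (simp add: h sum_distrib_left mult.assoc)
  moreover have "(\<Sum>ij \<in> Ps n. (r * q ij) * gJ ij) \<in> Jn n"
    by (rule Jn_I) (simp add: q r Rn_mult)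
  ultimately show ?thesis by simp
qed

lemma Rn_one [simp]: "(1::'k::field spoly) \<in> Rn n"
  using Rn_single[of 0 n "1::'k"] by simp

lemma Jn_uminus: "h \<in> Jn n \<Longrightarrow> - h \<in> Jn n"
proof -
  assume h: "h \<in> Jn n"
  have "(-1::'a spoly) \<in> Rn n" by (rule Rn_uminus) simp
  from Jn_mult[OF this h] show ?thesis by simp
qed

lemma Jn_diff: "h1 \<in> Jn n \<Longrightarrow> h2 \<in> Jn n \<Longrightarrow> h1 - h2 \<in> Jn n"
proof -
  assume "h1 \<in> Jn n" "h2 \<in> Jn n"
  then have "h1 + (- h2) \<in> Jn n" by (intro Jn_add Jn_uminus)
  then show ?thesis by simp
qed

lemma Jn_sum: "(\<And>x. x \<in> A \<Longrightarrow> f x \<in> Jn n) \<Longrightarrow> sum f A \<in> Jn n"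
  by (induction A rule: infinite_finite_induct) (auto intro: Jn_add)

lemma Jn_kscale: "h \<in> Jn n \<Longrightarrow> kscale c h \<in> Jn n"
  unfolding kscale_def by (rule Jn_mult) (auto intro: Rn_single)

lemma gJ_Rn: "ij \<in> Ps n \<Longrightarrow> gJ ij \<in> Rn n"
  by (cases ij) (auto simp: Ps_def intro!: Rn_diff Rn_mult Rn_X simp: power2_eq_square)

lemma Jn_Rn: "h \<in> Jn n \<Longrightarrow> h \<in> Rn n"
  by (erule Jn_E) (auto intro!: Rn_sum Rn_mult gJ_Rn)

lemma sum_delta_mult: "finite A \<Longrightarrow> a \<in> A \<Longrightarrow> (\<Sum>p \<in> A. (if p = a then m else 0) * (g p :: 'b::comm_ring_1)) = m * g a"
proof -
  assume "finite A" "a \<in> A"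
  have "(\<Sum>p \<in> A. (if p = a then m else 0) * g p) = (\<Sum>p \<in> A. if p = a then m * g p else 0)"
    by (rule sum.cong) auto
  also have "\<dots> = m * g a" using \<open>finite A\<close> \<open>a \<in> A\<close> by simp
  finally show ?thesis .
qed

lemma Jn_gen: "ij \<in> Ps n \<Longrightarrow> m \<in> Rn n \<Longrightarrow> m * gJ ij \<in> Jn n"
proof -
  assume ij: "ij \<in> Ps n" and m: "m \<in> Rn n"
  have eq: "(\<Sum>p \<in> Ps n. (if p = ij then m else 0) * gJ p) = m * gJ ij"
    by (rule sum_delta_mult[OF finite_Ps ij])
  have "(\<Sum>p \<in> Ps n. (if p = ij then m else 0) * gJ p) \<in> Jn n"
  proof (rule Jn_I[of "\<lambda>p. if p = ij then m else 0" n])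
    fix p show "(if p = ij then m else 0) \<in> Rn n" using m by (cases "p = ij") auto
  qed
  then show ?thesis unfolding eq .
qed



lemma VP_split: "VP n = Ps n \<union> (\<lambda>l. (l,l)) ` {1..n}"
  by (auto simp: VP_def Ps_def valid_idx_def)

lemma wt_diag: "wt (l,l) k = (if l = k then 2 else 0)"
  by (simp add: wt_def)

lemma Vdeg_split:
  assumes u: "u \<in> Mons n"
  shows "Vdeg u k = 2 * Poly_Mapping.lookup u (k,k) + (\<Sum>p\<in>Ps n. Poly_Mapping.lookup u p * wt p k)"
proof -
  have disj: "Ps n \<inter> (\<lambda>l. (l,l)) ` {1..n} = {}" by (auto simp: Ps_def)
  have "Vdeg u k = (\<Sum>p\<in>Ps n. Poly_Mapping.lookup u p * wt p k)
      + (\<Sum>p\<in>(\<lambda>l. (l,l)) ` {1..n}. Poly_Mapping.lookup u p * wt p k)"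
    unfolding Vdeg_Mons[OF u] VP_split by (rule sum.union_disjoint) (use disj in auto)
  also have "(\<Sum>p\<in>(\<lambda>l. (l,l)) ` {1..n}. Poly_Mapping.lookup u p * wt p k)
       = (\<Sum>l\<in>{1..n}. Poly_Mapping.lookup u (l,l) * wt (l,l) k)"
    by (subst sum.reindex) (auto simp: inj_on_def)
  also have "\<dots> = (\<Sum>l\<in>{1..n}. if l = k then 2 * Poly_Mapping.lookup u (k,k) else 0)"
    by (rule sum.cong) (auto simp: wt_diag)
  also have "\<dots> = 2 * Poly_Mapping.lookup u (k,k)"
    using Mons_lookup0[OF u, of "(k,k)"] by (auto simp: valid_idx_def)
  finally show ?thesis by simp
qed

lemma X_sq: "i < j \<Longrightarrow> (X i j :: 'k::field spoly)^2 = Poly_Mapping.single (Poly_Mapping.single (i,j) 2) 1"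
proof -
  assume "i < j"
  have "Poly_Mapping.single (i,j) (1::nat) + Poly_Mapping.single (i,j) 1 = Poly_Mapping.single (i,j) 2"
    by (simp add: single_add[symmetric] numeral_2_eq_2)
  then show ?thesis using \<open>i<j\<close> by (simp add: X_def power2_eq_square mult_single)
qed

lemma X_diag: "(X i i * X j j :: 'k::field spoly) = Poly_Mapping.single (Poly_Mapping.single (i,i) 1 + Poly_Mapping.single (j,j) 1) 1"
  by (simp add: X_def mult_single)

lemma red_step:
  assumes u: "u \<in> Mons n" and p: "(i,j) \<in> Ps n" and ge: "2 \<le> Poly_Mapping.lookup u (i,j)"
  defines "u1 \<equiv> Poly_Mapping.update (i,j) (Poly_Mapping.lookup u (i,j) - 2) u"
  shows "u = u1 + Poly_Mapping.single (i,j) 2" and "u1 \<in> Mons n" and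
     "Poly_Mapping.single u 1 - Poly_Mapping.single (u1 + Poly_Mapping.single (i,i) 1 + Poly_Mapping.single (j,j) 1) (1::'k::field) \<in> Jn n"
proof -
  show eq: "u = u1 + Poly_Mapping.single (i,j) 2"
    by (rule poly_mapping_eqI) (use ge in \<open>auto simp: u1_def lookup_add lookup_update lookup_single when_def\<close>)
  have vij: "valid_idx n (i,j)" using p by (auto simp: Ps_def valid_idx_def)
  show u1: "u1 \<in> Mons n"
    using u vij by (auto simp: Mons_def u1_def keys_update split: if_splits)
  have ij: "i < j" using p by (auto simp: Ps_def)
  have "Poly_Mapping.single u (1::'k) = Poly_Mapping.single u1 1 * X i j ^ 2"
    using ij by (subst eq) (simp add: X_sq mult_single)
  moreover have "Poly_Mapping.single (u1 + Poly_Mapping.single (i,i) 1 + Poly_Mapping.single (j,j) 1) (1::'k)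
      = Poly_Mapping.single u1 1 * (X i i * X j j)"
    by (simp add: X_diag mult_single add.assoc)
  ultimately have "Poly_Mapping.single u 1 - Poly_Mapping.single (u1 + Poly_Mapping.single (i,i) 1 + Poly_Mapping.single (j,j) 1) (1::'k)
      = - (Poly_Mapping.single u1 1 * gJ (i,j))"
    by (simp add: algebra_simps)
  moreover have "Poly_Mapping.single u1 1 * gJ (i,j) \<in> Jn n"
    by (rule Jn_gen[OF p]) (rule Rn_single[OF u1])
  ultimately show "Poly_Mapping.single u 1 - Poly_Mapping.single (u1 + Poly_Mapping.single (i,i) 1 + Poly_Mapping.single (j,j) 1) (1::'k::field) \<in> Jn n"
    by (metis Jn_uminus)
qed



lemma offsum_lt:
  fixes u v :: "(nat \<times> nat) \<Rightarrow>\<^sub>0 nat"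
  assumes p: "p \<in> Ps n" and lt: "Poly_Mapping.lookup v p < Poly_Mapping.lookup u p"
    and le: "\<And>q. q \<in> Ps n \<Longrightarrow> Poly_Mapping.lookup v q \<le> Poly_Mapping.lookup u q"
  shows "(\<Sum>q\<in>Ps n. Poly_Mapping.lookup v q) < (\<Sum>q\<in>Ps n. Poly_Mapping.lookup u q)"
  using p lt le by (intro sum_strict_mono_ex1) auto

lemma NF:
  fixes u :: "(nat \<times> nat) \<Rightarrow>\<^sub>0 nat"
  shows "u \<in> Mons n \<Longrightarrow> \<exists>w \<in> Mons n. (\<forall>k. Vdeg w k = Vdeg u k) \<and>
     (\<forall>p\<in>Ps n. Poly_Mapping.lookup w p = Poly_Mapping.lookup u p mod 2) \<and>
     Poly_Mapping.single u 1 - Poly_Mapping.single w (1::'k::field) \<in> Jn n"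
proof (induction u rule: measure_induct_rule[where f = "\<lambda>u. \<Sum>q\<in>Ps n. Poly_Mapping.lookup u q"])
  case (less u)
  show ?case
  proof (cases "\<exists>p\<in>Ps n. 2 \<le> Poly_Mapping.lookup u p")
    case False
    then have "\<forall>p\<in>Ps n. Poly_Mapping.lookup u p = Poly_Mapping.lookup u p mod 2" by auto
    then show ?thesis using less.prems by (intro bexI[of _ u]) auto
  next
    case True
    then obtain i j where p: "(i,j) \<in> Ps n" and ge: "2 \<le> Poly_Mapping.lookup u (i,j)" by auto
    define u1 where "u1 = Poly_Mapping.update (i,j) (Poly_Mapping.lookup u (i,j) - 2) u"
    define u2 where "u2 = u1 + Poly_Mapping.single (i,i) 1 + Poly_Mapping.single (j,j) 1"
    note rs = red_step[OF less.prems p ge, folded u1_def, folded u2_def]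
    have ij: "i < j" "1 \<le> i" "j \<le> n" using p by (auto simp: Ps_def)
    have u2M: "u2 \<in> Mons n" unfolding u2_def
      using ij by (intro Mons_add rs(2) Mons_single) (auto simp: valid_idx_def)
    have lk: "Poly_Mapping.lookup u2 q = (if q = (i,j) then Poly_Mapping.lookup u q - 2 else Poly_Mapping.lookup u q)"
      if "q \<in> Ps n" for q
      using that ij by (auto simp: u2_def u1_def lookup_add lookup_update lookup_single when_def Ps_def)
    have deg: "Vdeg u2 k = Vdeg u k" for k
      by (subst rs(1)) (simp add: u2_def Vdeg_add Vdeg_single wt_def)
    have lt: "(\<Sum>q\<in>Ps n. Poly_Mapping.lookup u2 q) < (\<Sum>q\<in>Ps n. Poly_Mapping.lookup u q)"
      by (rule offsum_lt[OF p]) (use ge lk p in auto)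
    from less.IH[OF lt u2M] obtain w where w: "w \<in> Mons n" "\<forall>k. Vdeg w k = Vdeg u2 k"
      "\<forall>p\<in>Ps n. Poly_Mapping.lookup w p = Poly_Mapping.lookup u2 p mod 2"
      "Poly_Mapping.single u2 1 - Poly_Mapping.single w (1::'k) \<in> Jn n" by blast
    have "\<forall>p\<in>Ps n. Poly_Mapping.lookup w p = Poly_Mapping.lookup u p mod 2"
    proof
      fix q assume q: "q \<in> Ps n"
      show "Poly_Mapping.lookup w q = Poly_Mapping.lookup u q mod 2"
        using w(3) q lk[OF q] ge by (auto simp: le_mod_geq)
    qed
    moreover have "Poly_Mapping.single u 1 - Poly_Mapping.single w (1::'k) \<in> Jn n"
    proof -
      have "Poly_Mapping.single u 1 - Poly_Mapping.single w (1::'k) =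
        (Poly_Mapping.single u 1 - Poly_Mapping.single u2 1) + (Poly_Mapping.single u2 1 - Poly_Mapping.single w 1)"
        by simp
      moreover have a: "Poly_Mapping.single u 1 - Poly_Mapping.single u2 (1::'k) \<in> Jn n"
        using rs(3) unfolding u2_def .
      ultimately show ?thesis using Jn_add[OF a w(4)] by simp
    qed
    ultimately show ?thesis using w(1,2) deg by auto
  qed
qed

lemma Mons_eqI:
  assumes u: "u \<in> Mons n" and v: "v \<in> Mons n" and d: "\<And>k. Vdeg u k = Vdeg v k"
    and p: "\<And>p. p \<in> Ps n \<Longrightarrow> Poly_Mapping.lookup u p = Poly_Mapping.lookup v p"
  shows "u = v"
proof (rule poly_mapping_eqI)
  fix ab :: "nat \<times> nat"
  obtain a b where ab: "ab = (a,b)" by (cases ab)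
  show "Poly_Mapping.lookup u ab = Poly_Mapping.lookup v ab"
  proof (cases "ab \<in> Ps n")
    case True then show ?thesis by (rule p)
  next
    case False
    show ?thesis
    proof (cases "a = b")
      case True
      have "(\<Sum>p\<in>Ps n. Poly_Mapping.lookup u p * wt p a) = (\<Sum>p\<in>Ps n. Poly_Mapping.lookup v p * wt p a)"
        by (rule sum.cong) (auto simp: p)
      then show ?thesis using d[of a] Vdeg_split[OF u, of a] Vdeg_split[OF v, of a] True ab by simp
    next
      case False
      then have "\<not> valid_idx n ab" using \<open>ab \<notin> Ps n\<close> ab by (auto simp: valid_idx_def Ps_def)
      then show ?thesis using Mons_lookup0[OF u] Mons_lookup0[OF v] by simp
    qed
  qed
qed

lemma cong_J:
  assumes u: "u \<in> Mons n" and v: "v \<in> Mons n" and d: "\<And>k. Vdeg u k = Vdeg v k"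
    and par: "\<And>p. p \<in> Ps n \<Longrightarrow> even (Poly_Mapping.lookup u p) = even (Poly_Mapping.lookup v p)"
  shows "Poly_Mapping.single u 1 - Poly_Mapping.single v (1::'k::field) \<in> Jn n"
proof -
  obtain wu where wu: "wu \<in> Mons n" "\<forall>k. Vdeg wu k = Vdeg u k"
      "\<forall>p\<in>Ps n. Poly_Mapping.lookup wu p = Poly_Mapping.lookup u p mod 2"
      "Poly_Mapping.single u 1 - Poly_Mapping.single wu (1::'k) \<in> Jn n"
    using NF[OF u] by blast
  obtain wv where wv: "wv \<in> Mons n" "\<forall>k. Vdeg wv k = Vdeg v k"
      "\<forall>p\<in>Ps n. Poly_Mapping.lookup wv p = Poly_Mapping.lookup v p mod 2"
      "Poly_Mapping.single v 1 - Poly_Mapping.single wv (1::'k) \<in> Jn n"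
    using NF[OF v] by blast
  have "wu = wv"
  proof (rule Mons_eqI[OF wu(1) wv(1)])
    show "Vdeg wu k = Vdeg wv k" for k using wu(2) wv(2) d by simp
    fix p assume p: "p \<in> Ps n"
    have "Poly_Mapping.lookup u p mod 2 = Poly_Mapping.lookup v p mod 2"
      using par[OF p] by (simp add: even_iff_mod_2_eq_zero) (metis mod2_eq_if)
    then show "Poly_Mapping.lookup wu p = Poly_Mapping.lookup wv p" using wu(3) wv(3) p by simp
  qed
  have "Poly_Mapping.single u 1 - Poly_Mapping.single v (1::'k) =
     (Poly_Mapping.single u 1 - Poly_Mapping.single wu 1) - (Poly_Mapping.single v 1 - Poly_Mapping.single wv 1)"
    using \<open>wu = wv\<close> by simp
  then show ?thesis using wu(4) wv(4) by (metis Jn_diff)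
qed



definition restr :: "(((nat \<times> nat) \<Rightarrow>\<^sub>0 nat) \<Rightarrow> bool) \<Rightarrow> 'k::field spoly \<Rightarrow> 'k spoly" where
  "restr P p = Abs_poly_mapping (\<lambda>u. if P u then Poly_Mapping.lookup p u else 0)"

lemma lookup_restr: "Poly_Mapping.lookup (restr P p) u = (if P u then Poly_Mapping.lookup p u else 0)"
proof -
  have "{u. (if P u then Poly_Mapping.lookup p u else 0) \<noteq> 0} \<subseteq> Poly_Mapping.keys p"
    by (auto simp: in_keys_iff split: if_splits)
  then have "finite {u. (if P u then Poly_Mapping.lookup p u else 0) \<noteq> 0}"
    by (rule finite_subset) simp
  then show ?thesis unfolding restr_def by simp
qed

lemma keys_restr: "Poly_Mapping.keys (restr P p) \<subseteq> {u \<in> Poly_Mapping.keys p. P u}"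
  by (auto simp: in_keys_iff lookup_restr split: if_splits)

lemma restr_add: "restr P (p + q) = restr P p + restr P q"
  by (rule poly_mapping_eqI) (simp add: lookup_restr lookup_add)

lemma restr_sum: "restr P (sum f A) = (\<Sum>x\<in>A. restr P (f x))"
  by (rule poly_mapping_eqI) (simp add: lookup_restr lookup_sum)

lemma restr_single: "restr P (Poly_Mapping.single k c) = (if P k then Poly_Mapping.single k c else 0)"
  by (rule poly_mapping_eqI) (auto simp: lookup_restr lookup_single when_def)

lemma restr_id: "(\<And>u. u \<in> Poly_Mapping.keys p \<Longrightarrow> P u) \<Longrightarrow> restr P p = p"
  by (rule poly_mapping_eqI) (auto simp: lookup_restr in_keys_iff)

lemma restr_Rn: "p \<in> Rn n \<Longrightarrow> restr P p \<in> Rn n"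
  using keys_restr[of P p] by (auto simp: Rn_def)

definition homog :: "'k::field spoly \<Rightarrow> (nat \<Rightarrow> nat) \<Rightarrow> bool" where
  "homog g D \<longleftrightarrow> (\<forall>v\<in>Poly_Mapping.keys g. \<forall>k. Vdeg v k = D k)"

lemma restr_mult_homog:
  assumes g: "homog g D"
  shows "restr (\<lambda>w. Vdeg w = b) (q * g) = restr (\<lambda>u. (\<lambda>k. Vdeg u k + D k) = b) q * g"
proof -
  let ?Q = "Poly_Mapping.keys q" and ?G = "Poly_Mapping.keys g"
  let ?c = "Poly_Mapping.lookup q" and ?d = "Poly_Mapping.lookup g"
  have "q * g = (\<Sum>u\<in>?Q. Poly_Mapping.single u (?c u)) * (\<Sum>v\<in>?G. Poly_Mapping.single v (?d v))"
    by (subst poly_expand[of q], subst poly_expand[of g]) (rule refl)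
  also have "\<dots> = (\<Sum>u\<in>?Q. \<Sum>v\<in>?G. Poly_Mapping.single (u + v) (?c u * ?d v))"
    by (simp add: sum_product mult_single)
  finally have qg: "q * g = (\<Sum>u\<in>?Q. \<Sum>v\<in>?G. Poly_Mapping.single (u + v) (?c u * ?d v))" .
  have "restr (\<lambda>w. Vdeg w = b) (q * g) =
     (\<Sum>u\<in>?Q. \<Sum>v\<in>?G. if (\<lambda>k. Vdeg u k + D k) = b then Poly_Mapping.single (u + v) (?c u * ?d v) else 0)"
    unfolding qg restr_sum restr_single
  proof (intro sum.cong refl)
    fix u v assume v: "v \<in> ?G"
    have "(\<lambda>k. Vdeg (u + v) k) = (\<lambda>k. Vdeg u k + D k)"
      using g v by (auto simp: homog_def Vdeg_add)
    then show "(if Vdeg (u + v) = b then Poly_Mapping.single (u + v) (?c u * ?d v) else 0) =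
       (if (\<lambda>k. Vdeg u k + D k) = b then Poly_Mapping.single (u + v) (?c u * ?d v) else 0)"
      by (metis (no_types) ext)
  qed
  also have "\<dots> = restr (\<lambda>u. (\<lambda>k. Vdeg u k + D k) = b) q * g"
  proof -
    let ?P = "\<lambda>u. (\<lambda>k. Vdeg u k + D k) = b"
    have e1: "restr ?P q = (\<Sum>u\<in>?Q. restr ?P (Poly_Mapping.single u (?c u)))"
      unfolding restr_sum[symmetric] by (rule arg_cong[where f="restr ?P"], rule poly_expand)
    have e2: "g = (\<Sum>v\<in>?G. Poly_Mapping.single v (?d v))" by (rule poly_expand)
    have "restr ?P q * g = (\<Sum>u\<in>?Q. restr ?P (Poly_Mapping.single u (?c u))) * (\<Sum>v\<in>?G. Poly_Mapping.single v (?d v))"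
      using e1 e2 by simp
    also have "\<dots> = (\<Sum>u\<in>?Q. \<Sum>v\<in>?G. restr ?P (Poly_Mapping.single u (?c u)) * Poly_Mapping.single v (?d v))"
      by (rule sum_product)
    also have "\<dots> = (\<Sum>u\<in>?Q. \<Sum>v\<in>?G. if ?P u then Poly_Mapping.single (u + v) (?c u * ?d v) else 0)"
      by (intro sum.cong refl) (simp add: restr_single mult_single)
    finally show ?thesis by simp
  qed
  finally show ?thesis .
qed

lemma homog_gJ:
  assumes "ij \<in> Ps n"
  shows "homog (gJ ij :: 'k::field spoly) (\<lambda>k. 2 * wt ij k)"
proof -
  obtain i j where ij: "ij = (i,j)" "i < j" using assms by (cases ij) (auto simp: Ps_def)
  have e: "gJ ij = Poly_Mapping.single (Poly_Mapping.single (i,i) 1 + Poly_Mapping.single (j,j) 1) (1::'k)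
      - Poly_Mapping.single (Poly_Mapping.single (i,j) 2) 1"
    using ij by (simp add: X_diag X_sq)
  show ?thesis unfolding homog_def
  proof (intro ballI allI)
    fix v k assume "v \<in> Poly_Mapping.keys (gJ ij :: 'k spoly)"
    moreover have "Poly_Mapping.keys (gJ ij :: 'k spoly) \<subseteq> {Poly_Mapping.single (i,i) (1::nat) + Poly_Mapping.single (j,j) 1, Poly_Mapping.single (i,j) 2}"
      unfolding e by (rule order_trans[OF keys_diff]) auto
    ultimately have "v = Poly_Mapping.single (i,i) (1::nat) + Poly_Mapping.single (j,j) 1 \<or> v = Poly_Mapping.single (i,j) 2"
      by blast
    then show "Vdeg v k = 2 * wt ij k"
      using ij by (auto simp: Vdeg_add Vdeg_single wt_def)
  qed
qed

lemma Jn_restr: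
  assumes h: "h \<in> Jn n"
  shows "restr (\<lambda>w. Vdeg w = b) h \<in> Jn n"
proof -
  obtain q where q: "\<And>ij. q ij \<in> Rn n" and he: "h = (\<Sum>ij \<in> Ps n. q ij * gJ ij)"
    using h unfolding Jn_alt by blast
  define q' where "q' ij = restr (\<lambda>u. (\<lambda>k. Vdeg u k + 2 * wt ij k) = b) (q ij)" for ij
  have "restr (\<lambda>w. Vdeg w = b) h = (\<Sum>ij \<in> Ps n. restr (\<lambda>w. Vdeg w = b) (q ij * gJ ij))"
    unfolding he restr_sum ..
  also have "\<dots> = (\<Sum>ij \<in> Ps n. q' ij * gJ ij)"
    unfolding q'_def by (intro sum.cong refl restr_mult_homog homog_gJ)
  finally have e: "restr (\<lambda>w. Vdeg w = b) h = (\<Sum>ij \<in> Ps n. q' ij * gJ ij)" .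
  have "(\<Sum>ij \<in> Ps n. q' ij * gJ ij) \<in> Jn n"
    by (rule Jn_I) (simp add: q'_def restr_Rn q)
  then show ?thesis unfolding e .
qed



lemma lookup_le_Vdeg:
  assumes u: "u \<in> Mons n" and p: "p \<in> VP n"
  shows "Poly_Mapping.lookup u p \<le> Vdeg u (fst p)"
proof -
  have "Poly_Mapping.lookup u p \<le> Poly_Mapping.lookup u p * wt p (fst p)"
    by (simp add: wt_def)
  also have "\<dots> \<le> (\<Sum>ij\<in>VP n. Poly_Mapping.lookup u ij * wt ij (fst p))"
    by (rule member_le_sum) (use p in auto)
  finally show ?thesis by (simp add: Vdeg_Mons[OF u])
qed

lemma fiber_finite: "finite (fiber n b)"
proof (rule inj_on_finite[where f = "\<lambda>u. restrict (Poly_Mapping.lookup u) (VP n)"])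
  show "inj_on (\<lambda>u. restrict (Poly_Mapping.lookup u) (VP n)) (fiber n b)"
  proof (rule inj_onI)
    fix u v assume u: "u \<in> fiber n b" and v: "v \<in> fiber n b"
      and e: "restrict (Poly_Mapping.lookup u) (VP n) = restrict (Poly_Mapping.lookup v) (VP n)"
    show "u = v"
    proof (rule poly_mapping_eqI)
      fix p show "Poly_Mapping.lookup u p = Poly_Mapping.lookup v p"
      proof (cases "p \<in> VP n")
        case True then show ?thesis using fun_cong[OF e, of p] by simp
      next
        case False then show ?thesis using u v Mons_lookup0[of u n p] Mons_lookup0[of v n p]
          by (auto simp: fiber_def VP_def)
      qed
    qed
  qed
  show "(\<lambda>u. restrict (Poly_Mapping.lookup u) (VP n)) ` fiber n b \<subseteq> PiE (VP n) (\<lambda>p. {0..b (fst p)})"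
  proof
    fix x assume "x \<in> (\<lambda>u. restrict (Poly_Mapping.lookup u) (VP n)) ` fiber n b"
    then obtain u where u: "u \<in> fiber n b" and x: "x = restrict (Poly_Mapping.lookup u) (VP n)" by blast
    have "Poly_Mapping.lookup u p \<le> b (fst p)" if "p \<in> VP n" for p
      using lookup_le_Vdeg[of u n p] that u by (auto simp: fiber_def)
    then show "x \<in> PiE (VP n) (\<lambda>p. {0..b (fst p)})" unfolding x by auto
  qed
  show "finite (PiE (VP n) (\<lambda>p. {0..b (fst p)}))"
    by (rule finite_PiE) auto
qed

lemma Rdeg_iff: "p \<in> Rdeg n b \<longleftrightarrow> (\<forall>u\<in>Poly_Mapping.keys p. u \<in> Mons n \<and> Vdeg u = b)"
  by (auto simp: Rdeg_def Rn_def)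

lemma Rdeg_span: "Rdeg n b \<subseteq> ks.span ((\<lambda>u. Poly_Mapping.single u (1::'k::field)) ` fiber n b)"
proof
  fix p :: "'k spoly" assume p: "p \<in> Rdeg n b"
  have "p = (\<Sum>u\<in>Poly_Mapping.keys p. kscale (Poly_Mapping.lookup p u) (Poly_Mapping.single u 1))"
    by (subst poly_expand) (simp add: kscale_single)
  also have "\<dots> \<in> ks.span ((\<lambda>u. Poly_Mapping.single u (1::'k::field)) ` fiber n b)"
    using p by (intro ks.span_sum ks.span_scale ks.span_base) (auto simp: Rdeg_iff fiber_def)
  finally show "p \<in> ks.span ((\<lambda>u. Poly_Mapping.single u (1::'k::field)) ` fiber n b)" .
qed

lemma homog_sum_single:
  assumes "\<And>s. s \<in> S \<Longrightarrow> (\<forall>k. Vdeg (m s) k = D k)"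
  shows "homog ((\<Sum>s\<in>S. Poly_Mapping.single (m s) 1) :: 'k::field spoly) D"
  unfolding homog_def using keys_sum[of "\<lambda>s. Poly_Mapping.single (m s) (1::'k)" S] assms by auto

lemma keys_single_mult:
  "Poly_Mapping.keys (Poly_Mapping.single u 1 * (\<Sum>s\<in>S. Poly_Mapping.single (m s) 1) :: 'k::field spoly)
    \<subseteq> (\<lambda>s. u + m s) ` S"
proof -
  have "Poly_Mapping.single u 1 * (\<Sum>s\<in>S. Poly_Mapping.single (m s) 1) =
      (\<Sum>s\<in>S. Poly_Mapping.single (u + m s) (1::'k))"
    by (simp add: sum_distrib_left mult_single)
  then show ?thesis using keys_sum[of "\<lambda>s. Poly_Mapping.single (u + m s) (1::'k)" S] by auto
qed

lemma hilb_le1: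
  fixes f :: "'k::field spoly"
  assumes S: "finite S" and m: "\<And>s. s \<in> S \<Longrightarrow> m s \<in> Mons n \<and> (\<forall>k. Vdeg (m s) k = D k)"
    and f: "f = (\<Sum>s\<in>S. Poly_Mapping.single (m s) 1)"
    and key: "\<And>u u'. u \<in> Mons n \<Longrightarrow> u' \<in> Mons n \<Longrightarrow> (\<forall>k. Vdeg u k = Vdeg u' k) \<Longrightarrow>
        Poly_Mapping.single u 1 * f - Poly_Mapping.single u' 1 * f \<in> Jn n"
  shows "hilb n f b \<le> 1"
proof -
  let ?G = "gen_mod n f \<inter> Rdeg n b" and ?J = "Jn n \<inter> Rdeg n b :: 'k spoly set"
  let ?P = "\<lambda>u. (\<lambda>k. Vdeg u k + D k) = b"
  define A where "A = {u \<in> Mons n. ?P u}"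
  define w where "w = (if A = {} then 0 else Poly_Mapping.single (SOME u. u \<in> A) 1 * f)"
  have hf: "homog f D" unfolding f by (rule homog_sum_single) (use m in blast)
  have mono_Rdeg: "Poly_Mapping.single u 1 * f \<in> Rdeg n b" if u: "u \<in> A" for u
  proof -
    have "v \<in> Mons n \<and> Vdeg v = b" if v: "v \<in> Poly_Mapping.keys (Poly_Mapping.single u 1 * f)" for v
    proof -
      obtain s where s: "s \<in> S" "v = u + m s" using v keys_single_mult[of u m S] unfolding f by blast
      show ?thesis using u s m[OF s(1)] by (auto simp: A_def Mons_add Vdeg_add)
    qed
    then show ?thesis by (simp add: Rdeg_iff)
  qed
  have Rdeg_diff: "p - q \<in> Rdeg n b" if "p \<in> Rdeg n b" "q \<in> Rdeg n b" for p q :: "'k spoly"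
    using that keys_diff[of p q] by (auto simp: Rdeg_iff)
  have mono_span: "Poly_Mapping.single u 1 * f \<in> ks.span (insert w ?J)" if u: "u \<in> A" for u
  proof -
    have Ane: "A \<noteq> {}" using u by auto
    define u0 where "u0 = (SOME u. u \<in> A)"
    have u0: "u0 \<in> A" unfolding u0_def using Ane by (simp add: some_in_eq)
    have w: "w = Poly_Mapping.single u0 1 * f" using Ane by (simp add: w_def u0_def)
    have dd: "\<forall>k. Vdeg u k = Vdeg u0 k"
    proof
      fix k
      have "Vdeg u k + D k = Vdeg u0 k + D k" using u u0 unfolding A_def by (metis (mono_tags) mem_Collect_eq)
      then show "Vdeg u k = Vdeg u0 k" by simp
    qed
    have dJ: "Poly_Mapping.single u 1 * f - w \<in> ?J"
      using key[of u u0] u u0 dd mono_Rdeg[OF u] mono_Rdeg[OF u0] Rdeg_diff unfolding w A_def by auto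
    have "Poly_Mapping.single u 1 * f = w + (Poly_Mapping.single u 1 * f - w)" by simp
    also have "\<dots> \<in> ks.span (insert w ?J)"
      using dJ by (intro ks.span_add ks.span_base) auto
    finally show ?thesis .
  qed
  have Gsub: "?G \<subseteq> ks.span (insert w ?J)"
  proof
    fix z assume z: "z \<in> ?G"
    then obtain q h where q: "q \<in> Rn n" and h: "h \<in> Jn n" and zq: "z = q * f + h"
      by (auto simp: gen_mod_def)
    have zR: "z \<in> Rdeg n b" using z by simp
    have "z = restr (\<lambda>w. Vdeg w = b) z"
      by (rule restr_id[symmetric]) (use zR in \<open>auto simp: Rdeg_iff\<close>)
    also have "\<dots> = restr ?P q * f + restr (\<lambda>w. Vdeg w = b) h"
      unfolding zq restr_add restr_mult_homog[OF hf] ..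
    finally have ze: "z = restr ?P q * f + restr (\<lambda>w. Vdeg w = b) h" .
    have h1: "restr (\<lambda>w. Vdeg w = b) h \<in> ?J"
    proof
      show "restr (\<lambda>w. Vdeg w = b) h \<in> Jn n" by (rule Jn_restr[OF h])
      have "h \<in> Rn n" by (rule Jn_Rn[OF h])
      then show "restr (\<lambda>w. Vdeg w = b) h \<in> Rdeg n b"
        using keys_restr[of "\<lambda>w. Vdeg w = b" h] by (auto simp: Rdeg_iff Rn_def)
    qed
    define q' where "q' = restr ?P q"
    have kq': "u \<in> A" if "u \<in> Poly_Mapping.keys q'" for u
      using that keys_restr[of ?P q] q by (auto simp: q'_def A_def Rn_def)
    have "q' * f = (\<Sum>u\<in>Poly_Mapping.keys q'. kscale (Poly_Mapping.lookup q' u) (Poly_Mapping.single u 1 * f))"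
    proof -
      have "q' * f = (\<Sum>u\<in>Poly_Mapping.keys q'. Poly_Mapping.single u (Poly_Mapping.lookup q' u)) * f"
        by (subst poly_expand[of q']) (rule refl)
      also have "\<dots> = (\<Sum>u\<in>Poly_Mapping.keys q'. kscale (Poly_Mapping.lookup q' u) (Poly_Mapping.single u 1) * f)"
        by (simp add: kscale_single sum_distrib_right)
      finally show ?thesis by (simp add: kscale_mult)
    qed
    also have "\<dots> \<in> ks.span (insert w ?J)"
      by (intro ks.span_sum ks.span_scale mono_span kq')
    finally have "q' * f \<in> ks.span (insert w ?J)" .
    moreover have "restr (\<lambda>w. Vdeg w = b) h \<in> ks.span (insert w ?J)"
      using h1 by (intro ks.span_base) auto
    ultimately show "z \<in> ks.span (insert w ?J)"
      unfolding ze q'_def[symmetric] by (rule ks.span_add)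
  qed
  obtain B where B: "B \<subseteq> ?J" "ks.independent B" "?J \<subseteq> ks.span B" "card B = ks.dim ?J"
    using ks.basis_exists[of ?J] by blast
  have "B \<subseteq> ks.span ((\<lambda>u. Poly_Mapping.single u (1::'k)) ` fiber n b)"
    using B(1) Rdeg_span by blast
  then have finB: "finite B"
    using ks.independent_span_bound[OF _ B(2)] fiber_finite by blast
  have "ks.span (insert w ?J) \<subseteq> ks.span (insert w B)"
  proof (rule ks.span_minimal)
    show "insert w ?J \<subseteq> ks.span (insert w B)"
      using B(3) ks.span_mono[of B "insert w B"] ks.span_base[of w "insert w B"] by blast
  qed simp
  with Gsub have "?G \<subseteq> ks.span (insert w B)" by blast
  then have "ks.dim ?G \<le> card (insert w B)"
    by (rule ks.dim_le_card) (simp add: finB)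
  also have "\<dots> \<le> card B + 1" using finB by (simp add: card_insert_if)
  finally have "ks.dim ?G \<le> ks.dim ?J + 1" using B(4) by simp
  then show ?thesis unfolding hilb_def by simp
qed



lemma key_generic:
  fixes S :: "'s set" and m :: "'s \<Rightarrow> (nat \<times> nat) \<Rightarrow>\<^sub>0 nat"
  assumes S: "finite S" and m: "\<And>s. s \<in> S \<Longrightarrow> m s \<in> Mons n \<and> (\<forall>k. Vdeg (m s) k = D k)"
    and u: "u \<in> Mons n" and u': "u' \<in> Mons n" and d: "\<forall>k. Vdeg u k = Vdeg u' k"
    and bij: "bij_betw \<pi> S S"
    and par: "\<And>s p. s \<in> S \<Longrightarrow> p \<in> Ps n \<Longrightarrow> odd (Poly_Mapping.lookup (m (\<pi> s)) p) =
        (odd (Poly_Mapping.lookup (m s) p) \<noteq> (odd (Poly_Mapping.lookup u p) \<noteq> odd (Poly_Mapping.lookup u' p)))"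
  shows "Poly_Mapping.single u 1 * (\<Sum>s\<in>S. Poly_Mapping.single (m s) 1)
     - Poly_Mapping.single u' 1 * (\<Sum>s\<in>S. Poly_Mapping.single (m s) 1) \<in> (Jn n :: 'k::field spoly set)"
proof -
  have e1: "Poly_Mapping.single u 1 * (\<Sum>s\<in>S. Poly_Mapping.single (m s) 1) = (\<Sum>s\<in>S. Poly_Mapping.single (u + m s) (1::'k::field))"
    by (simp add: sum_distrib_left mult_single)
  have "Poly_Mapping.single u' 1 * (\<Sum>s\<in>S. Poly_Mapping.single (m s) 1) = (\<Sum>s\<in>S. Poly_Mapping.single (u' + m s) (1::'k))"
    by (simp add: sum_distrib_left mult_single)
  also have "\<dots> = (\<Sum>s\<in>S. Poly_Mapping.single (u' + m (\<pi> s)) (1::'k))"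
    by (rule sum.reindex_bij_betw[OF bij, symmetric])
  finally have e2: "Poly_Mapping.single u' 1 * (\<Sum>s\<in>S. Poly_Mapping.single (m s) 1) = (\<Sum>s\<in>S. Poly_Mapping.single (u' + m (\<pi> s)) (1::'k))" .
  have "(\<Sum>s\<in>S. Poly_Mapping.single (u + m s) (1::'k)) - (\<Sum>s\<in>S. Poly_Mapping.single (u' + m (\<pi> s)) 1)
      = (\<Sum>s\<in>S. Poly_Mapping.single (u + m s) 1 - Poly_Mapping.single (u' + m (\<pi> s)) 1)"
    by (simp add: sum_subtractf)
  also have "\<dots> \<in> Jn n"
  proof (rule Jn_sum)
    fix s assume s: "s \<in> S"
    have ps: "\<pi> s \<in> S" using bij s by (auto simp: bij_betw_def)
    show "Poly_Mapping.single (u + m s) 1 - Poly_Mapping.single (u' + m (\<pi> s)) (1::'k) \<in> Jn n"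
    proof (rule cong_J)
      show "u + m s \<in> Mons n" using u m[OF s] by (simp add: Mons_add)
      show "u' + m (\<pi> s) \<in> Mons n" using u' m[OF ps] by (simp add: Mons_add)
      show "Vdeg (u + m s) k = Vdeg (u' + m (\<pi> s)) k" for k
        using d m[OF s] m[OF ps] by (simp add: Vdeg_add)
      show "even (Poly_Mapping.lookup (u + m s) p) = even (Poly_Mapping.lookup (u' + m (\<pi> s)) p)" if p: "p \<in> Ps n" for p
        using par[OF s p] by (auto simp: lookup_add)
    qed
  qed
  finally show ?thesis using e1 e2 by simp
qed

lemma bool_mod2: "(of_bool (odd a \<noteq> odd b) :: nat) = (a + b) mod 2"
  by (cases "even a"; cases "even b") (auto simp: mod2_eq_if)

lemma even_deg:
  assumes u: "u \<in> Mons n" and u': "u' \<in> Mons n" and d: "\<forall>k. Vdeg u k = Vdeg u' k"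
  shows "even (\<Sum>p\<in>Ps n. of_bool (odd (Poly_Mapping.lookup u p) \<noteq> odd (Poly_Mapping.lookup u' p)) * wt p k)"
proof -
  let ?S1 = "\<Sum>p\<in>Ps n. Poly_Mapping.lookup u p * wt p k"
  let ?S2 = "\<Sum>p\<in>Ps n. Poly_Mapping.lookup u' p * wt p k"
  have "2 * Poly_Mapping.lookup u (k,k) + ?S1 = 2 * Poly_Mapping.lookup u' (k,k) + ?S2"
    using Vdeg_split[OF u, of k] Vdeg_split[OF u', of k] d by simp
  then have ev: "even (?S1 + ?S2)" by presburger
  have "?S1 + ?S2 = (\<Sum>p\<in>Ps n. (Poly_Mapping.lookup u p + Poly_Mapping.lookup u' p) * wt p k)"
    by (simp add: sum.distrib algebra_simps)
  also have "\<dots> mod 2 = (\<Sum>p\<in>Ps n. ((Poly_Mapping.lookup u p + Poly_Mapping.lookup u' p) * wt p k) mod 2) mod 2"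
    by (simp add: mod_sum_eq)
  also have "\<dots> = (\<Sum>p\<in>Ps n. (of_bool (odd (Poly_Mapping.lookup u p) \<noteq> odd (Poly_Mapping.lookup u' p)) * wt p k) mod 2) mod 2"
    by (rule arg_cong[where f="\<lambda>x. x mod 2"], rule sum.cong[OF refl]) (simp only: bool_mod2 mod_mult_left_eq)
  also have "\<dots> = (\<Sum>p\<in>Ps n. of_bool (odd (Poly_Mapping.lookup u p) \<noteq> odd (Poly_Mapping.lookup u' p)) * wt p k) mod 2"
    by (simp add: mod_sum_eq)
  finally show ?thesis using ev by presburger
qed

lemma par_aux: "(T::nat) = A1 + Y \<Longrightarrow> T = A2 + S \<Longrightarrow> Y = a + b \<Longrightarrow> S = c + a \<Longrightarrow> Dd = c + b \<Longrightarrow>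
   even A1 = (even A2 = even Dd)"
  by presburger

lemma parity_symdiff:
  fixes g :: "'a \<Rightarrow> nat"
  assumes P: "finite P" and sig: "\<sigma> \<subseteq> P" and D: "Dl \<subseteq> P"
  shows "even (sum g (P - ((\<sigma> - Dl) \<union> (Dl - \<sigma>)))) = (even (sum g (P - \<sigma>)) = even (sum g Dl))"
proof -
  have fs: "finite \<sigma>" "finite Dl" using P sig D finite_subset by auto
  let ?X = "(\<sigma> - Dl) \<union> (Dl - \<sigma>)"
  have X: "?X \<subseteq> P" using sig D by auto
  have a1: "sum g P = sum g (P - ?X) + sum g ?X"
    by (rule sum.subset_diff[OF X P])
  have a2: "sum g P = sum g (P - \<sigma>) + sum g \<sigma>"
    by (rule sum.subset_diff[OF sig P])
  have b1: "sum g ?X = sum g (\<sigma> - Dl) + sum g (Dl - \<sigma>)"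
    by (rule sum.union_disjoint) (use fs in auto)
  have b2: "sum g \<sigma> = sum g (\<sigma> \<inter> Dl) + sum g (\<sigma> - Dl)"
    by (rule sum.Int_Diff[OF fs(1)])
  have b3: "sum g Dl = sum g (Dl \<inter> \<sigma>) + sum g (Dl - \<sigma>)"
    by (rule sum.Int_Diff[OF fs(2)])
  have b4: "Dl \<inter> \<sigma> = \<sigma> \<inter> Dl" by blast
  show ?thesis by (rule par_aux[OF a1 a2 b1 b2 b3[unfolded b4]])
qed



definition eA :: "nat \<Rightarrow> nat \<times> nat \<Rightarrow> (nat \<times> nat) \<Rightarrow>\<^sub>0 nat" where
  "eA n p = Poly_Mapping.single (fst p, snd p) 1 + Poly_Mapping.single (n,n) 1"
definition eB :: "nat \<Rightarrow> nat \<times> nat \<Rightarrow> (nat \<times> nat) \<Rightarrow>\<^sub>0 nat" where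
  "eB n p = Poly_Mapping.single (fst p, n) 1 + Poly_Mapping.single (snd p, n) 1"
definition mP :: "nat \<Rightarrow> (nat \<times> nat) set \<Rightarrow> (nat \<times> nat) \<Rightarrow>\<^sub>0 nat" where
  "mP n \<sigma> = (\<Sum>p\<in>\<sigma>. eA n p) + (\<Sum>p\<in>Ps (n-1) - \<sigma>. eB n p)"

lemma prod_single: "finite A \<Longrightarrow> (\<Prod>x\<in>A. Poly_Mapping.single (g x) (1::'k::field)) = Poly_Mapping.single (\<Sum>x\<in>A. g x) 1"
  by (induction A rule: finite_induct) (auto simp: mult_single)

lemma Ps_mem: "p \<in> Ps m \<longleftrightarrow> 1 \<le> fst p \<and> fst p < snd p \<and> snd p \<le> m"
  by (cases p) (auto simp: Ps_def)

lemma pn_expand: "pn n = (\<Sum>\<sigma>\<in>Pow (Ps (n-1)). Poly_Mapping.single (mP n \<sigma>) (1::'k::field))"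
proof -
  have "pn n = (\<Prod>p\<in>Ps (n-1). Poly_Mapping.single (eA n p) (1::'k) + Poly_Mapping.single (eB n p) 1)"
    unfolding pn_def Ps_def[symmetric]
  proof (rule prod.cong[OF refl])
    fix p assume p: "p \<in> Ps (n-1)"
    then have "fst p < snd p" "snd p < n" by (auto simp: Ps_mem)
    then show "X (fst p) (snd p) * X n n + X (fst p) n * X (snd p) n =
       Poly_Mapping.single (eA n p) (1::'k) + Poly_Mapping.single (eB n p) 1"
      by (simp add: X_def mult_single eA_def eB_def)
  qed
  also have "\<dots> = (\<Sum>\<sigma>\<in>Pow (Ps (n-1)). (\<Prod>p\<in>\<sigma>. Poly_Mapping.single (eA n p) (1::'k)) *
        (\<Prod>p\<in>Ps (n-1) - \<sigma>. Poly_Mapping.single (eB n p) 1))"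
    by (rule prod_add) simp
  also have "\<dots> = (\<Sum>\<sigma>\<in>Pow (Ps (n-1)). Poly_Mapping.single (mP n \<sigma>) (1::'k))"
  proof (rule sum.cong[OF refl])
    fix \<sigma> assume "\<sigma> \<in> Pow (Ps (n-1))"
    then have "finite \<sigma>" by (meson PowD finite_Ps finite_subset)
    then show "(\<Prod>p\<in>\<sigma>. Poly_Mapping.single (eA n p) (1::'k)) * (\<Prod>p\<in>Ps (n-1) - \<sigma>. Poly_Mapping.single (eB n p) 1)
        = Poly_Mapping.single (mP n \<sigma>) 1"
      by (simp add: prod_single mult_single mP_def)
  qed
  finally show ?thesis .
qed

lemma Vdeg_sum: "Vdeg (sum f A) k = (\<Sum>x\<in>A. Vdeg (f x) k)"
  by (induction A rule: infinite_finite_induct) (auto simp: Vdeg_add)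

lemma Mons_sum: "(\<And>x. x \<in> A \<Longrightarrow> f x \<in> Mons n) \<Longrightarrow> sum f A \<in> Mons n"
  by (induction A rule: infinite_finite_induct) (auto intro: Mons_add)

lemma mP_Mons: "\<sigma> \<subseteq> Ps (n-1) \<Longrightarrow> mP n \<sigma> \<in> Mons n"
proof -
  assume s: "\<sigma> \<subseteq> Ps (n-1)"
  have "p \<in> Ps (n-1) \<Longrightarrow> 1 \<le> fst p \<and> fst p < snd p \<and> snd p < n" for p by (auto simp: Ps_mem)
  then show ?thesis using s unfolding mP_def eA_def eB_def
    by (intro Mons_add Mons_sum Mons_single) (force simp: valid_idx_def)+
qed

lemma mP_Vdeg: "\<sigma> \<subseteq> Ps (n-1) \<Longrightarrow> Vdeg (mP n \<sigma>) k = (\<Sum>p\<in>Ps (n-1). wt p k + wt (n,n) k)"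
proof -
  assume s: "\<sigma> \<subseteq> Ps (n-1)"
  have fs: "finite \<sigma>" using s finite_subset[OF _ finite_Ps] by blast
  have a: "Vdeg (eA n p) k = wt p k + wt (n,n) k" for p
    by (simp add: eA_def Vdeg_add Vdeg_single wt_def)
  have b: "Vdeg (eB n p) k = wt p k + wt (n,n) k" for p
    by (simp add: eB_def Vdeg_add Vdeg_single wt_def)
  have "Vdeg (mP n \<sigma>) k = (\<Sum>p\<in>\<sigma>. wt p k + wt (n,n) k) + (\<Sum>p\<in>Ps (n-1) - \<sigma>. wt p k + wt (n,n) k)"
    by (simp add: mP_def Vdeg_add Vdeg_sum a b)
  also have "\<dots> = (\<Sum>p\<in>Ps (n-1). wt p k + wt (n,n) k)"
    using sum.subset_diff[OF s finite_Ps, of "\<lambda>p. wt p k + wt (n,n) k"] by simp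
  finally show ?thesis .
qed

lemma mP_lookup_lt:
  assumes s: "\<sigma> \<subseteq> Ps (n-1)" and q: "q \<in> Ps (n-1)"
  shows "Poly_Mapping.lookup (mP n \<sigma>) q = of_bool (q \<in> \<sigma>)"
proof -
  obtain i j where q': "q = (i,j)" "i < j" "j < n" using q by (cases q) (auto simp: Ps_mem)
  have fs: "finite \<sigma>" using s finite_subset[OF _ finite_Ps] by blast
  have "Poly_Mapping.lookup (mP n \<sigma>) q = (\<Sum>p\<in>\<sigma>. of_bool (p = q)) + (\<Sum>p\<in>Ps (n-1) - \<sigma>. 0)"
    unfolding mP_def lookup_add lookup_sum
    by (intro arg_cong2[where f="(+)"] sum.cong refl)
       (use q' in \<open>auto simp: eA_def eB_def lookup_add lookup_single when_def\<close>)
  also have "\<dots> = of_bool (q \<in> \<sigma>)" using fs by simp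
  finally show ?thesis .
qed

lemma mP_lookup_n:
  assumes s: "\<sigma> \<subseteq> Ps (n-1)" and i: "1 \<le> i" "i < n"
  shows "Poly_Mapping.lookup (mP n \<sigma>) (i,n) = (\<Sum>p\<in>Ps (n-1) - \<sigma>. wt p i)"
proof -
  have "Poly_Mapping.lookup (mP n \<sigma>) (i,n) = (\<Sum>p\<in>\<sigma>. 0) + (\<Sum>p\<in>Ps (n-1) - \<sigma>. wt p i)"
    unfolding mP_def lookup_add lookup_sum
    by (intro arg_cong2[where f="(+)"] sum.cong refl)
       (use s i in \<open>auto simp: eA_def eB_def lookup_add lookup_single when_def wt_def Ps_mem\<close>)
  then show ?thesis by simp
qed

lemma Ps_split: "1 \<le> n \<Longrightarrow> Ps n = Ps (n-1) \<union> (\<lambda>l. (l,n)) ` {1..<n}"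
  by (auto simp: Ps_def)

lemma delta_count:
  assumes n: "2 \<le> n" and i: "1 \<le> i" "i < n" and ev: "even (\<Sum>p\<in>Ps n. of_bool (\<delta> p) * wt p i)"
  shows "odd (\<Sum>p\<in>{p\<in>Ps (n-1). \<delta> p}. wt p i) = \<delta> (i,n)"
proof -
  have disj: "Ps (n-1) \<inter> (\<lambda>l. (l,n)) ` {1..<n} = {}" by (auto simp: Ps_def)
  have "(\<Sum>p\<in>Ps n. of_bool (\<delta> p) * wt p i) =
      (\<Sum>p\<in>Ps (n-1). of_bool (\<delta> p) * wt p i) + (\<Sum>p\<in>(\<lambda>l. (l,n)) ` {1..<n}. of_bool (\<delta> p) * wt p i)"
  proof -
    have split: "Ps n = Ps (n-1) \<union> (\<lambda>l. (l,n)) ` {1..<n}" using n by (intro Ps_split) simp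
    show ?thesis unfolding split by (rule sum.union_disjoint) (simp, simp, force simp: Ps_def)
  qed
  also have "(\<Sum>p\<in>(\<lambda>l. (l,n)) ` {1..<n}. of_bool (\<delta> p) * wt p i) = (\<Sum>l\<in>{1..<n}. of_bool (\<delta> (l,n)) * wt (l,n) i)"
    by (subst sum.reindex) (auto simp: inj_on_def)
  also have "\<dots> = (\<Sum>l\<in>{1..<n}. if l = i then of_bool (\<delta> (i,n)) else 0)"
    by (rule sum.cong) (use i in \<open>auto simp: wt_def\<close>)
  also have "\<dots> = of_bool (\<delta> (i,n))" using i by simp
  also have "(\<Sum>p\<in>Ps (n-1). of_bool (\<delta> p) * wt p i) = (\<Sum>p\<in>{p\<in>Ps (n-1). \<delta> p}. wt p i)"
    by (subst sum.inter_filter[OF finite_Ps]) (rule sum.cong, auto)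
  finally show ?thesis using ev by auto
qed



lemma hilb_pn:
  assumes n: "2 \<le> n"
  shows "hilb n (pn n :: 'k::field spoly) b \<le> 1"
proof (rule hilb_le1[where S = "Pow (Ps (n-1))" and m = "mP n" and D = "\<lambda>k. \<Sum>p\<in>Ps (n-1). wt p k + wt (n,n) k"])
  show "finite (Pow (Ps (n-1)))" by simp
  show "mP n s \<in> Mons n \<and> (\<forall>k. Vdeg (mP n s) k = (\<Sum>p\<in>Ps (n-1). wt p k + wt (n,n) k))"
    if "s \<in> Pow (Ps (n-1))" for s
    using that mP_Mons[of s n] mP_Vdeg[of s n] by auto
  show "pn n = (\<Sum>s\<in>Pow (Ps (n-1)). Poly_Mapping.single (mP n s) (1::'k))" by (rule pn_expand)
  fix u u' assume u: "u \<in> Mons n" and u': "u' \<in> Mons n" and d: "\<forall>k. Vdeg u k = Vdeg u' k"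
  define \<delta> where "\<delta> p = (odd (Poly_Mapping.lookup u p) \<noteq> odd (Poly_Mapping.lookup u' p))" for p
  define Dl where "Dl = {p \<in> Ps (n-1). \<delta> p}"
  define \<pi> where "\<pi> \<sigma> = (\<sigma> - Dl) \<union> (Dl - \<sigma>)" for \<sigma> :: "(nat \<times> nat) set"
  have Dl: "Dl \<subseteq> Ps (n-1)" by (auto simp: Dl_def)
  have bij: "bij_betw \<pi> (Pow (Ps (n-1))) (Pow (Ps (n-1)))"
    by (rule bij_betw_byWitness[where f' = \<pi>]) (use Dl in \<open>auto simp: \<pi>_def\<close>)
  have ev: "even (\<Sum>p\<in>Ps n. of_bool (\<delta> p) * wt p k)" for k
    unfolding \<delta>_def by (rule even_deg[OF u u' d])
  have "Poly_Mapping.single u 1 * (\<Sum>s\<in>Pow (Ps (n-1)). Poly_Mapping.single (mP n s) 1)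
     - Poly_Mapping.single u' 1 * (\<Sum>s\<in>Pow (Ps (n-1)). Poly_Mapping.single (mP n s) 1) \<in> (Jn n :: 'k spoly set)"
  proof (rule key_generic[OF _ _ u u' d bij])
    show "finite (Pow (Ps (n-1)))" by simp
    show "mP n s \<in> Mons n \<and> (\<forall>k. Vdeg (mP n s) k = (\<Sum>p\<in>Ps (n-1). wt p k + wt (n,n) k))"
      if "s \<in> Pow (Ps (n-1))" for s
      using that mP_Mons[of s n] mP_Vdeg[of s n] by auto
    fix \<sigma> p assume s: "\<sigma> \<in> Pow (Ps (n-1))" and p: "p \<in> Ps n"
    have s': "\<sigma> \<subseteq> Ps (n-1)" using s by simp
    have ps: "\<pi> \<sigma> \<subseteq> Ps (n-1)" using s' Dl by (auto simp: \<pi>_def)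
    obtain i j where ij: "p = (i,j)" "1 \<le> i" "i < j" "j \<le> n" using p by (cases p) (auto simp: Ps_def)
    show "odd (Poly_Mapping.lookup (mP n (\<pi> \<sigma>)) p) =
        (odd (Poly_Mapping.lookup (mP n \<sigma>) p) \<noteq> (odd (Poly_Mapping.lookup u p) \<noteq> odd (Poly_Mapping.lookup u' p)))"
    proof (cases "j < n")
      case True
      then have p1: "p \<in> Ps (n-1)" using ij by (auto simp: Ps_def)
      show ?thesis
        unfolding mP_lookup_lt[OF s' p1] mP_lookup_lt[OF ps p1] \<delta>_def[symmetric]
        using p1 by (auto simp: \<pi>_def Dl_def)
    next
      case False
      then have jn: "j = n" using ij by simp
      have "odd (\<Sum>p\<in>Ps (n-1) - \<pi> \<sigma>. wt p i) = (odd (\<Sum>p\<in>Ps (n-1) - \<sigma>. wt p i) \<noteq> odd (\<Sum>p\<in>Dl. wt p i))"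
        using parity_symdiff[OF finite_Ps s' Dl, of "\<lambda>p. wt p i"] unfolding \<pi>_def by simp
      moreover have "odd (\<Sum>p\<in>Dl. wt p i) = \<delta> (i,n)"
        unfolding Dl_def by (rule delta_count[OF n]) (use ij jn ev in auto)
      ultimately show ?thesis
        using ij jn mP_lookup_n[OF s' ij(2)] mP_lookup_n[OF ps ij(2)] by (simp add: \<delta>_def)
    qed
  qed
  then show "Poly_Mapping.single u 1 * pn n - Poly_Mapping.single u' 1 * pn n \<in> (Jn n :: 'k spoly set)"
    by (simp only: pn_expand)
qed



definition Lsum :: "nat \<Rightarrow> (nat \<times> nat \<Rightarrow> int) \<Rightarrow> nat \<times> nat \<Rightarrow> int" where
  "Lsum n c ab = (\<Sum>ij \<in> Ps n. c ij * brk (fst ij) (snd ij) ab)"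

lemma Lprime_alt: "Lprime n = {Lsum n c | c. True}"
  unfolding Lprime_def Lsum_def Ps_def by (rule refl)

lemma brk_off: "i < j \<Longrightarrow> a < b \<Longrightarrow> brk i j (a,b) = (if (a,b) = (i,j) then -2 else 0)"
  by (auto simp: brk_def)

lemma brk_gt: "i < j \<Longrightarrow> b < a \<Longrightarrow> brk i j (a,b) = 0"
  by (auto simp: brk_def)

lemma brk_diag: "i < j \<Longrightarrow> brk i j (k,k) = int (wt (i,j) k)"
  by (auto simp: brk_def wt_def)

lemma Lsum_off: "a < b \<Longrightarrow> Lsum n c (a,b) = (if (a,b) \<in> Ps n then -2 * c (a,b) else 0)"
proof -
  assume ab: "a < b"
  have "Lsum n c (a,b) = (\<Sum>ij \<in> Ps n. if ij = (a,b) then -2 * c (a,b) else 0)"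
    unfolding Lsum_def by (rule sum.cong) (use ab in \<open>auto simp: brk_off Ps_mem\<close>)
  then show ?thesis by simp
qed

lemma Lsum_gt: "b < a \<Longrightarrow> Lsum n c (a,b) = 0"
  unfolding Lsum_def by (rule sum.neutral) (auto simp: brk_gt Ps_mem)

lemma Lsum_diag: "Lsum n c (k,k) = (\<Sum>p \<in> Ps n. c p * int (wt p k))"
  unfolding Lsum_def by (rule sum.cong) (auto simp: brk_diag Ps_mem)

lemma Vdeg_int:
  assumes u: "u \<in> Mons n"
  shows "int (Vdeg u k) = 2 * int (Poly_Mapping.lookup u (k,k)) + (\<Sum>p\<in>Ps n. int (Poly_Mapping.lookup u p) * int (wt p k))"
  using Vdeg_split[OF u, of k] by simp

lemma Lequiv_iff: "(u,v) \<in> Lequiv n \<longleftrightarrow> (\<exists>c. (\<forall>ab. int (Poly_Mapping.lookup u ab) - int (Poly_Mapping.lookup v ab) = Lsum n c ab))"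
  unfolding Lequiv_def Lprime_alt by (auto simp: fun_eq_iff)

lemma Lequiv_char:
  assumes u: "u \<in> Mons n"
  shows "(u,v) \<in> Lequiv n \<longleftrightarrow> v \<in> Mons n \<and> (\<forall>k. Vdeg v k = Vdeg u k) \<and>
     (\<forall>p\<in>Ps n. even (Poly_Mapping.lookup u p) = even (Poly_Mapping.lookup v p))"
proof
  assume "(u,v) \<in> Lequiv n"
  then obtain c where c: "\<And>ab. int (Poly_Mapping.lookup u ab) - int (Poly_Mapping.lookup v ab) = Lsum n c ab"
    unfolding Lequiv_iff by blast
  have off: "int (Poly_Mapping.lookup u p) - int (Poly_Mapping.lookup v p) = -2 * c p" if p: "p \<in> Ps n" for p
    using c[of p] Lsum_off[of "fst p" "snd p" n c] p by (cases p) (auto simp: Ps_mem)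
  have vM: "v \<in> Mons n"
  proof -
    have "Poly_Mapping.lookup v ab = 0" if ab: "\<not> valid_idx n ab" for ab
    proof -
      obtain a b where e: "ab = (a,b)" by (cases ab)
      have "Lsum n c ab = 0"
      proof (cases "a < b")
        case True then show ?thesis using ab e by (auto simp: Lsum_off Ps_mem valid_idx_def)
      next
        case False
        show ?thesis
        proof (cases "a = b")
          case True
          have "(\<Sum>p \<in> Ps n. c p * int (wt p a)) = 0"
            by (rule sum.neutral) (use ab e True in \<open>auto simp: wt_def Ps_mem valid_idx_def\<close>)
          then show ?thesis using e True Lsum_diag by simp
        next
          case False then show ?thesis using \<open>\<not> a < b\<close> e Lsum_gt by simp
        qed
      qed
      then show ?thesis using c[of ab] Mons_lookup0[OF u ab] by simp
    qed
    then show ?thesis by (auto simp: Mons_def in_keys_iff)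
  qed
  have par: "\<forall>p\<in>Ps n. even (Poly_Mapping.lookup u p) = even (Poly_Mapping.lookup v p)"
  proof
    fix p assume p: "p \<in> Ps n"
    have "even (int (Poly_Mapping.lookup u p) - int (Poly_Mapping.lookup v p))" using off[OF p] by simp
    then show "even (Poly_Mapping.lookup u p) = even (Poly_Mapping.lookup v p)" by simp
  qed
  have deg: "Vdeg v k = Vdeg u k" for k
  proof -
    have "int (Vdeg u k) - int (Vdeg v k) = 2 * (int (Poly_Mapping.lookup u (k,k)) - int (Poly_Mapping.lookup v (k,k)))
        + (\<Sum>p\<in>Ps n. (int (Poly_Mapping.lookup u p) - int (Poly_Mapping.lookup v p)) * int (wt p k))"
      unfolding Vdeg_int[OF u] Vdeg_int[OF vM] by (simp add: sum_subtractf algebra_simps)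
    also have "\<dots> = 2 * (\<Sum>p \<in> Ps n. c p * int (wt p k)) + (\<Sum>p\<in>Ps n. (-2 * c p) * int (wt p k))"
      using c[of "(k,k)"] by (simp add: Lsum_diag off)
    also have "\<dots> = 0" by (simp add: sum_distrib_left algebra_simps sum_negf)
    finally show ?thesis by simp
  qed
  show "v \<in> Mons n \<and> (\<forall>k. Vdeg v k = Vdeg u k) \<and> (\<forall>p\<in>Ps n. even (Poly_Mapping.lookup u p) = even (Poly_Mapping.lookup v p))"
    using vM deg par by blast
next
  assume "v \<in> Mons n \<and> (\<forall>k. Vdeg v k = Vdeg u k) \<and> (\<forall>p\<in>Ps n. even (Poly_Mapping.lookup u p) = even (Poly_Mapping.lookup v p))"
  then have vM: "v \<in> Mons n" and deg: "\<And>k. Vdeg v k = Vdeg u k"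
    and par: "\<And>p. p \<in> Ps n \<Longrightarrow> even (Poly_Mapping.lookup u p) = even (Poly_Mapping.lookup v p)" by auto
  define c where "c p = - ((int (Poly_Mapping.lookup u p) - int (Poly_Mapping.lookup v p)) div 2)" for p
  have off: "int (Poly_Mapping.lookup u p) - int (Poly_Mapping.lookup v p) = -2 * c p" if p: "p \<in> Ps n" for p
  proof -
    have "even (int (Poly_Mapping.lookup u p) - int (Poly_Mapping.lookup v p))" using par[OF p] by simp
    then show ?thesis unfolding c_def by simp
  qed
  have "int (Poly_Mapping.lookup u ab) - int (Poly_Mapping.lookup v ab) = Lsum n c ab" for ab
  proof -
    obtain a b where e: "ab = (a,b)" by (cases ab)
    consider "a < b" | "b < a" | "a = b" by linarith
    then show ?thesis
    proof cases
      case 1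
      show ?thesis
      proof (cases "(a,b) \<in> Ps n")
        case True then show ?thesis using e 1 off by (simp add: Lsum_off)
      next
        case False
        then have "\<not> valid_idx n (a,b)" using 1 by (auto simp: valid_idx_def Ps_def)
        then show ?thesis using e 1 False Mons_lookup0[OF u] Mons_lookup0[OF vM] by (simp add: Lsum_off)
      qed
    next
      case 2
      then have "\<not> valid_idx n (a,b)" by (auto simp: valid_idx_def)
      then show ?thesis using e 2 Mons_lookup0[OF u] Mons_lookup0[OF vM] by (simp add: Lsum_gt)
    next
      case 3
      have "0 = int (Vdeg u a) - int (Vdeg v a)" using deg[of a] by simp
      also have "\<dots> = 2 * (int (Poly_Mapping.lookup u (a,a)) - int (Poly_Mapping.lookup v (a,a)))
        + (\<Sum>p\<in>Ps n. (int (Poly_Mapping.lookup u p) - int (Poly_Mapping.lookup v p)) * int (wt p a))"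
        unfolding Vdeg_int[OF u] Vdeg_int[OF vM] by (simp add: sum_subtractf algebra_simps)
      also have "(\<Sum>p\<in>Ps n. (int (Poly_Mapping.lookup u p) - int (Poly_Mapping.lookup v p)) * int (wt p a))
          = -2 * (\<Sum>p\<in>Ps n. c p * int (wt p a))"
        by (simp add: off sum_distrib_left algebra_simps cong: sum.cong)
      finally show ?thesis using e 3 by (simp add: Lsum_diag)
    qed
  qed
  then show "(u,v) \<in> Lequiv n" unfolding Lequiv_iff by blast
qed



definition dP :: "nat \<Rightarrow> (nat \<times> nat \<Rightarrow> bool) \<Rightarrow> nat \<Rightarrow> nat" where
  "dP n P k = (\<Sum>p\<in>Ps n. of_bool (P p) * wt p k)"

definition wcon :: "nat \<Rightarrow> (nat \<Rightarrow> nat) \<Rightarrow> (nat \<times> nat \<Rightarrow> bool) \<Rightarrow> (nat \<times> nat) \<Rightarrow>\<^sub>0 nat" where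
  "wcon n c P = (\<Sum>p\<in>{p\<in>Ps n. P p}. Poly_Mapping.single p 1)
      + (\<Sum>k\<in>{1..n}. Poly_Mapping.single (k,k) ((c k - dP n P k) div 2))"

lemma wcon_Mons: "wcon n c P \<in> Mons n"
  unfolding wcon_def
  by (intro Mons_add Mons_sum Mons_single) (auto simp: valid_idx_def Ps_mem)

lemma wcon_lookup_Ps: "p \<in> Ps n \<Longrightarrow> Poly_Mapping.lookup (wcon n c P) p = of_bool (P p)"
proof -
  assume p: "p \<in> Ps n"
  have "Poly_Mapping.lookup (wcon n c P) p = (\<Sum>q\<in>{p\<in>Ps n. P p}. if q = p then 1 else 0) + (\<Sum>k\<in>{1..n}. 0)"
    unfolding wcon_def lookup_add lookup_sum
    by (intro arg_cong2[where f="(+)"] sum.cong refl) (use p in \<open>auto simp: lookup_single when_def Ps_mem\<close>)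
  also have "\<dots> = of_bool (P p)" using p by (simp add: sum.delta)
  finally show ?thesis .
qed

lemma wcon_lookup_diag: "Poly_Mapping.lookup (wcon n c P) (k,k) = (if k \<in> {1..n} then (c k - dP n P k) div 2 else 0)"
proof -
  have "Poly_Mapping.lookup (wcon n c P) (k,k) = (\<Sum>q\<in>{p\<in>Ps n. P p}. 0)
      + (\<Sum>l\<in>{1..n}. if l = k then (c k - dP n P k) div 2 else 0)"
    unfolding wcon_def lookup_add lookup_sum
    by (intro arg_cong2[where f="(+)"] sum.cong refl) (auto simp: lookup_single when_def Ps_mem)
  also have "\<dots> = (if k \<in> {1..n} then (c k - dP n P k) div 2 else 0)" by (simp add: sum.delta)
  finally show ?thesis .
qed

lemma half_aux: "(d::nat) \<le> c \<Longrightarrow> even (c - d) \<Longrightarrow> 2 * ((c - d) div 2) + d = c"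
  by (metis dvd_mult_div_cancel le_add_diff_inverse2)

lemma wcon_Vdeg:
  assumes c0: "\<And>k. k \<notin> {1..n} \<Longrightarrow> c k = 0"
    and cd: "\<And>k. k \<in> {1..n} \<Longrightarrow> dP n P k \<le> c k \<and> even (c k - dP n P k)"
  shows "Vdeg (wcon n c P) k = c k"
proof -
  have "Vdeg (wcon n c P) k = 2 * Poly_Mapping.lookup (wcon n c P) (k,k) + (\<Sum>p\<in>Ps n. of_bool (P p) * wt p k)"
    unfolding Vdeg_split[OF wcon_Mons] by (simp add: wcon_lookup_Ps cong: sum.cong)
  also have "(\<Sum>p\<in>Ps n. of_bool (P p) * wt p k) = dP n P k" by (simp add: dP_def)
  finally have e: "Vdeg (wcon n c P) k = 2 * Poly_Mapping.lookup (wcon n c P) (k,k) + dP n P k" .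
  show ?thesis
  proof (cases "k \<in> {1..n}")
    case True
    then show ?thesis using e half_aux[of "dP n P k" "c k"] cd[OF True] by (simp only: wcon_lookup_diag if_True)
  next
    case False
    have "dP n P k = 0" unfolding dP_def by (rule sum.neutral) (use False in \<open>auto simp: wt_def Ps_mem\<close>)
    then show ?thesis using e False c0[OF False] by (simp add: wcon_lookup_diag)
  qed
qed

lemma wcon_cong: "(\<And>p. p \<in> Ps n \<Longrightarrow> P p = Q p) \<Longrightarrow> wcon n c P = wcon n c Q"
proof -
  assume h: "\<And>p. p \<in> Ps n \<Longrightarrow> P p = Q p"
  have "{p\<in>Ps n. P p} = {p\<in>Ps n. Q p}" using h by auto
  moreover have "dP n P = dP n Q" unfolding dP_def using h by (intro ext sum.cong) auto
  ultimately show ?thesis unfolding wcon_def by simp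
qed

lemma wt_total:
  assumes k: "k \<in> {1..n}"
  shows "(\<Sum>p\<in>Ps n. wt p k) = n - 1"
proof -
  have "(\<Sum>p\<in>Ps n. wt p k) = (\<Sum>p\<in>Ps n. if fst p = k then 1 else 0) + (\<Sum>p\<in>Ps n. if snd p = k then 1 else 0)"
    by (simp add: wt_def sum.distrib)
  also have "(\<Sum>p\<in>Ps n. if fst p = k then 1 else 0) = card {p\<in>Ps n. fst p = k}"
    by (simp add: sum.If_cases Int_def)
  also have "{p\<in>Ps n. fst p = k} = (\<lambda>j. (k,j)) ` {k<..n}" using k by (auto simp: Ps_def)
  also have "card \<dots> = n - k" by (subst card_image) (auto simp: inj_on_def)
  also have "(\<Sum>p\<in>Ps n. if snd p = k then 1 else 0) = card {p\<in>Ps n. snd p = k}"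
    by (simp add: sum.If_cases Int_def)
  also have "{p\<in>Ps n. snd p = k} = (\<lambda>i. (i,k)) ` {1..<k}" using k by (auto simp: Ps_def)
  also have "card \<dots> = k - 1" by (subst card_image) (auto simp: inj_on_def)
  finally show ?thesis using k by simp
qed

lemma dP_le: "k \<in> {1..n} \<Longrightarrow> dP n P k \<le> n - 1"
proof -
  assume k: "k \<in> {1..n}"
  have "dP n P k \<le> (\<Sum>p\<in>Ps n. wt p k)" unfolding dP_def by (rule sum_mono) simp
  then show ?thesis using wt_total[OF k] by simp
qed



definition rep :: "((nat \<times> nat) \<Rightarrow>\<^sub>0 nat) set \<Rightarrow> (nat \<times> nat) \<Rightarrow>\<^sub>0 nat" where
  "rep C = (SOME u. u \<in> C)"

lemma class_char: "y \<in> Mons n \<Longrightarrow> Lequiv n `` {y} =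
   {v. v \<in> Mons n \<and> (\<forall>k. Vdeg v k = Vdeg y k) \<and> (\<forall>p\<in>Ps n. even (Poly_Mapping.lookup y p) = even (Poly_Mapping.lookup v p))}"
  using Lequiv_char[of y n] by auto

lemma class_eq:
  assumes "y1 \<in> Mons n" "y2 \<in> Mons n" "\<And>k. Vdeg y1 k = Vdeg y2 k"
    "\<And>p. p \<in> Ps n \<Longrightarrow> even (Poly_Mapping.lookup y1 p) = even (Poly_Mapping.lookup y2 p)"
  shows "Lequiv n `` {y1} = Lequiv n `` {y2}"
  unfolding class_char[OF assms(1)] class_char[OF assms(2)] using assms(3,4) by auto

lemma self_in_class: "y \<in> Mons n \<Longrightarrow> y \<in> Lequiv n `` {y}"
  using class_char[of y n] by auto

lemma rep_in_class: "y \<in> Mons n \<Longrightarrow> rep (Lequiv n `` {y}) \<in> Lequiv n `` {y}"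
  unfolding rep_def by (rule someI_ex) (use self_in_class in blast)

lemma bool_mod2b: "(of_bool (odd a \<noteq> d) + a) mod 2 = (of_bool d :: nat) mod 2"
  by (cases "even a"; cases d) (auto simp: mod2_eq_if)

lemma par_bound:
  assumes "(d::nat) \<le> n - 1" "n - 2 \<le> c" "2 \<le> n" "even (d + c)"
  shows "d \<le> c \<and> even (c - d)"
proof -
  have "d \<le> c"
  proof (rule ccontr)
    assume "\<not> d \<le> c"
    then have "d = n - 1" "c = n - 2" using assms(1,2) by linarith+
    then have "d = c + 1" using assms(3) by linarith
    then show False using assms(4) by simp
  qed
  moreover have "even (c - d)" using assms(4) \<open>d \<le> c\<close> by (simp add: even_diff_nat)
  ultimately show ?thesis by simp
qed

lemma mm2: "(x::nat) mod 2 = y mod 2 \<Longrightarrow> (x * w) mod 2 = (y * w) mod 2"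
  by (metis mod_mult_left_eq)

lemma fin_aux: "(Z::nat) = 2 * r + S \<Longrightarrow> S mod 2 = T mod 2 \<Longrightarrow> even T \<Longrightarrow> even Z"
  by (simp add: even_iff_mod_2_eq_zero)

lemma even_dP:
  assumes r: "r \<in> Mons n" and u: "u \<in> Mons n" and u': "u' \<in> Mons n" and d: "\<forall>k. Vdeg u k = Vdeg u' k"
  shows "even (dP n (\<lambda>p. odd (Poly_Mapping.lookup r p) \<noteq> (odd (Poly_Mapping.lookup u p) \<noteq> odd (Poly_Mapping.lookup u' p))) k + Vdeg r k)"
proof -
  let ?\<delta> = "\<lambda>p. odd (Poly_Mapping.lookup u p) \<noteq> odd (Poly_Mapping.lookup u' p)"
  let ?a = "\<lambda>p. of_bool (odd (Poly_Mapping.lookup r p) \<noteq> ?\<delta> p) :: nat"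
  have ev: "even (\<Sum>p\<in>Ps n. of_bool (?\<delta> p) * wt p k)" by (rule even_deg[OF u u' d])
  have "dP n (\<lambda>p. odd (Poly_Mapping.lookup r p) \<noteq> ?\<delta> p) k + Vdeg r k
      = 2 * Poly_Mapping.lookup r (k,k) + (\<Sum>p\<in>Ps n. (?a p + Poly_Mapping.lookup r p) * wt p k)"
    unfolding dP_def Vdeg_split[OF r] by (simp add: sum.distrib algebra_simps)
  moreover have "(\<Sum>p\<in>Ps n. (?a p + Poly_Mapping.lookup r p) * wt p k) mod 2 = (\<Sum>p\<in>Ps n. of_bool (?\<delta> p) * wt p k) mod 2"
  proof -
    have "(\<Sum>p\<in>Ps n. (?a p + Poly_Mapping.lookup r p) * wt p k) mod 2
        = (\<Sum>p\<in>Ps n. ((?a p + Poly_Mapping.lookup r p) * wt p k) mod 2) mod 2"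
      by (simp only: mod_sum_eq)
    also have "\<dots> = (\<Sum>p\<in>Ps n. (of_bool (?\<delta> p) * wt p k) mod 2) mod 2"
      by (rule arg_cong[where f="\<lambda>x. x mod 2"], rule sum.cong[OF refl])
         (rule mm2, rule bool_mod2b)
    also have "\<dots> = (\<Sum>p\<in>Ps n. of_bool (?\<delta> p) * wt p k) mod 2"
      by (simp only: mod_sum_eq)
    finally show ?thesis .
  qed
  ultimately show ?thesis using ev by (rule fin_aux)
qed



lemma fiber_iff: "u \<in> fiber n c \<longleftrightarrow> u \<in> Mons n \<and> (\<forall>k. Vdeg u k = c k)"
  by (auto simp: fiber_def)

lemma hilb_cs:
  assumes n: "2 \<le> n" and c0: "\<And>k. k \<notin> {1..n} \<Longrightarrow> c k = 0"
    and cge: "\<And>k. k \<in> {1..n} \<Longrightarrow> n - 2 \<le> c k"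
  shows "hilb n (class_sum n c :: 'k::field spoly) b \<le> 1"
proof -
  let ?S = "fiber n c // Lequiv n"
  have Sx: "\<exists>x\<in>fiber n c. C = Lequiv n `` {x}" if "C \<in> ?S" for C
    using that by (auto simp: quotient_def)
  have finS: "finite ?S"
  proof -
    have "?S = (\<lambda>x. Lequiv n `` {x}) ` fiber n c" by (auto simp: quotient_def)
    then show ?thesis using fiber_finite by simp
  qed
  have repS: "rep C \<in> fiber n c \<and> rep C \<in> C \<and> (\<forall>p\<in>Ps n. even (Poly_Mapping.lookup (rep C) p) = even (Poly_Mapping.lookup x p))"
    if C: "C = Lequiv n `` {x}" and x: "x \<in> fiber n c" for C x
  proof -
    have xM: "x \<in> Mons n" using x by (simp add: fiber_iff)
    have "rep C \<in> C" using rep_in_class[OF xM] C by simp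
    then show ?thesis using C x xM class_char[OF xM] by (auto simp: fiber_iff)
  qed
  have m: "rep C \<in> Mons n \<and> (\<forall>k. Vdeg (rep C) k = c k)" if "C \<in> ?S" for C
    using Sx[OF that] repS by (auto simp: fiber_iff)
  have cs: "class_sum n c = (\<Sum>C\<in>?S. Poly_Mapping.single (rep C) (1::'k))"
    unfolding class_sum_def rep_def ..
  show ?thesis
  proof (rule hilb_le1[OF finS m cs])
    fix u u' assume u: "u \<in> Mons n" and u': "u' \<in> Mons n" and d: "\<forall>k. Vdeg u k = Vdeg u' k"
    define \<delta> where "\<delta> p = (odd (Poly_Mapping.lookup u p) \<noteq> odd (Poly_Mapping.lookup u' p))" for p
    define PC where "PC C p = (odd (Poly_Mapping.lookup (rep C) p) \<noteq> \<delta> p)" for C p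
    define \<pi> where "\<pi> C = Lequiv n `` {wcon n c (PC C)}" for C
    have wfib: "wcon n c (PC C) \<in> fiber n c" if C: "C \<in> ?S" for C
    proof -
      have rM: "rep C \<in> Mons n" and rd: "\<And>k. Vdeg (rep C) k = c k" using m[OF C] by auto
      have hyp: "dP n (PC C) k \<le> c k \<and> even (c k - dP n (PC C) k)" if k: "k \<in> {1..n}" for k
      proof (rule par_bound[OF dP_le[OF k] cge[OF k] n])
        show "even (dP n (PC C) k + c k)"
          using even_dP[OF rM u u' d, of k] rd[of k] unfolding PC_def \<delta>_def by simp
      qed
      show ?thesis unfolding fiber_iff
        using wcon_Mons wcon_Vdeg[of n c "PC C", OF c0 hyp] by blast
    qed
    have piS: "\<pi> C \<in> ?S" if "C \<in> ?S" for C
      unfolding \<pi>_def by (rule quotientI[OF wfib[OF that]])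
    have parpi: "even (Poly_Mapping.lookup (rep (\<pi> C)) p) = (\<not> PC C p)" if C: "C \<in> ?S" and p: "p \<in> Ps n" for C p
    proof -
      have wM: "wcon n c (PC C) \<in> fiber n c" by (rule wfib[OF C])
      from repS[OF \<pi>_def wM] p have "even (Poly_Mapping.lookup (rep (\<pi> C)) p) = even (Poly_Mapping.lookup (wcon n c (PC C)) p)"
        by blast
      then show ?thesis using wcon_lookup_Ps[OF p] by simp
    qed
    have inv: "\<pi> (\<pi> C) = C" if C: "C \<in> ?S" for C
    proof -
      obtain x where x: "x \<in> fiber n c" and Cx: "C = Lequiv n `` {x}" using Sx[OF C] by blast
      have eq: "wcon n c (PC (\<pi> C)) = wcon n c (\<lambda>p. odd (Poly_Mapping.lookup (rep C) p))"
      proof (rule wcon_cong)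
        fix p assume p: "p \<in> Ps n"
        show "PC (\<pi> C) p = odd (Poly_Mapping.lookup (rep C) p)"
          using parpi[OF C p] unfolding PC_def by auto
      qed
      have w2: "wcon n c (\<lambda>p. odd (Poly_Mapping.lookup (rep C) p)) \<in> fiber n c"
        using wfib[OF piS[OF C]] unfolding eq .
      have "Lequiv n `` {wcon n c (\<lambda>p. odd (Poly_Mapping.lookup (rep C) p))} = Lequiv n `` {x}"
      proof (rule class_eq)
        show "wcon n c (\<lambda>p. odd (Poly_Mapping.lookup (rep C) p)) \<in> Mons n" by (rule wcon_Mons)
        show "x \<in> Mons n" using x by (simp add: fiber_iff)
        show "Vdeg (wcon n c (\<lambda>p. odd (Poly_Mapping.lookup (rep C) p))) k = Vdeg x k" for k
          using w2 x by (simp add: fiber_iff)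
        fix p assume p: "p \<in> Ps n"
        show "even (Poly_Mapping.lookup (wcon n c (\<lambda>p. odd (Poly_Mapping.lookup (rep C) p))) p) = even (Poly_Mapping.lookup x p)"
          using wcon_lookup_Ps[OF p] repS[OF Cx x] p by simp
      qed
      then show ?thesis unfolding \<pi>_def[of "\<pi> C"] eq Cx[symmetric] .
    qed
    have bij: "bij_betw \<pi> ?S ?S"
      by (rule bij_betw_byWitness[where f' = \<pi>]) (use inv piS in auto)
    show "Poly_Mapping.single u 1 * class_sum n c - Poly_Mapping.single u' 1 * class_sum n c \<in> (Jn n :: 'k spoly set)"
      unfolding cs
    proof (rule key_generic[OF finS m u u' d bij])
      fix C p assume C: "C \<in> ?S" and p: "p \<in> Ps n"
      show "odd (Poly_Mapping.lookup (rep (\<pi> C)) p) =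
         (odd (Poly_Mapping.lookup (rep C) p) \<noteq> (odd (Poly_Mapping.lookup u p) \<noteq> odd (Poly_Mapping.lookup u' p)))"
        using parpi[OF C p] unfolding PC_def \<delta>_def by simp
    qed
  qed
qed



theorem lemma2p19:
  fixes n :: nat
  assumes "n \<ge> 2"
  shows "(\<forall>b. hilb n (pn n :: 'k::field spoly) b \<in> {0, 1}) \<and>
         (\<forall>i \<in> {1..n}. \<forall>b. hilb n (pplus n i :: 'k::field spoly) b \<in> {0, 1})"
proof (intro conjI ballI allI)
  fix b
  have "hilb n (pn n :: 'k spoly) b \<le> 1" by (rule hilb_pn[OF assms])
  then show "hilb n (pn n :: 'k spoly) b \<in> {0, 1}" by auto
next
  fix i b assume i: "i \<in> {1..n}"
  have "hilb n (pplus n i :: 'k spoly) b \<le> 1"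
  proof (cases "odd n")
    case True
    have "hilb n (class_sum n (\<lambda>k. if 1 \<le> k \<and> k \<le> n then (n - 2) + (if k = i then 1 else 0) else 0) :: 'k spoly) b \<le> 1"
      by (rule hilb_cs[OF assms]) auto
    then show ?thesis using True by (simp add: pplus_def)
  next
    case False
    have "hilb n (class_sum n (\<lambda>k. if 1 \<le> k \<and> k \<le> n then n - 2 else 0) :: 'k spoly) b \<le> 1"
      by (rule hilb_cs[OF assms]) auto
    then show ?thesis using False by (simp add: pplus_def)
  qed
  then show "hilb n (pplus n i :: 'k spoly) b \<in> {0, 1}" by auto
qed

end
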